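(* For every $p\ge0$ and every $n\ge2$, there exists a $\Sigma^0_p$ equivalence relation on $\omega$ which is complete under $n$-ary reducibility $\leq_c^n$ among $\Sigma^0_p$ equivalence relations, but fails to be complete among them under $\leq_c^{n+1}$. Likewise, there exists a $\Pi^0_p$ equivalence relation on $\omega$ which is complete under $\leq_c^n$ among $\Pi^0_p$ equivalence relations, but not under $\leq_c^{n+1}$.
   Context: For equivalence relations $E,F$ on $\omega$ and $n\ge1$, $F\leq_c^nE$ means there is a total computable function mapping each $(x_0,\dots,x_{n-1})\in\omega^n$ to $(y_0,\dots,y_{n-1})\in\omega^n$ with $x_i\,F\,x_j\iff y_i\,E\,y_j$ for all $i<j<n$. A $\Sigma^0_p$ (resp. $\Pi^0_p$) equivalence relation is an equivalence relation on $\omega$ that is a $\Sigma^0_p$ (resp. $\Pi^0_p$) subset of $\omega\times\omega$; $\Sigma^0_0=\Pi^0_0$ means computable. $E$ is complete under $\leq_c^n$ among a class if it belongs to the class and every member $F$ of the class satisfies $F\leq_c^nE$. *)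

theory Defs
  imports Main "HOL-Library.Nat_Bijection"
begin

text \<open>recfn k f: f, restricted to argument lists of length k, is a total
(general) recursive function of arity k.  Built from zero, successor,
projections by composition, primitive recursion and regular (total)
minimisation; by Kleene's normal form this is exactly the class of total
computable functions.\<close>

inductive recfn :: "nat \<Rightarrow> (nat list \<Rightarrow> nat) \<Rightarrow> bool" where
  rf_zero: "recfn k (\<lambda>xs. 0)"
| rf_succ: "recfn 1 (\<lambda>xs. Suc (hd xs))"
| rf_proj: "i < k \<Longrightarrow> recfn k (\<lambda>xs. xs ! i)"
| rf_comp: "recfn m f \<Longrightarrow> (\<forall>i<m. recfn k (gs i))
     \<Longrightarrow> recfn k (\<lambda>xs. f (map (\<lambda>i. gs i xs) [0..<m]))"
| rf_prim: "recfn k f \<Longrightarrow> recfn (k + 2) g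
     \<Longrightarrow> recfn (k + 1) (\<lambda>xs. rec_nat (f (tl xs)) (\<lambda>y r. g (y # r # tl xs)) (hd xs))"
| rf_mu: "recfn (k + 1) f \<Longrightarrow> (\<forall>xs. length xs = k \<longrightarrow> (\<exists>y. f (y # xs) = 0))
     \<Longrightarrow> recfn k (\<lambda>xs. LEAST y. f (y # xs) = 0)"
| rf_ext: "recfn k f \<Longrightarrow> (\<forall>xs. length xs = k \<longrightarrow> g xs = f xs) \<Longrightarrow> recfn k g"

definition computable_set :: "nat set \<Rightarrow> bool" where
  "computable_set A \<longleftrightarrow> (\<exists>f. recfn 1 f \<and> (\<forall>x. x \<in> A \<longleftrightarrow> f [x] = 0))"

fun Sigma0 :: "nat \<Rightarrow> nat set \<Rightarrow> bool" where
  "Sigma0 0 A = computable_set A"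
| "Sigma0 (Suc p) A = (\<exists>B. Sigma0 p (- B) \<and> A = {x. \<exists>y. prod_encode (x, y) \<in> B})"

definition Pi0 :: "nat \<Rightarrow> nat set \<Rightarrow> bool" where
  "Pi0 p A \<longleftrightarrow> Sigma0 p (- A)"

definition Sigma_eqrel :: "nat \<Rightarrow> (nat \<times> nat) set \<Rightarrow> bool" where
  "Sigma_eqrel p E \<longleftrightarrow> equiv UNIV E \<and> Sigma0 p (prod_encode ` E)"

definition Pi_eqrel :: "nat \<Rightarrow> (nat \<times> nat) set \<Rightarrow> bool" where
  "Pi_eqrel p E \<longleftrightarrow> equiv UNIV E \<and> Pi0 p (prod_encode ` E)"

definition nary_reducible :: "nat \<Rightarrow> (nat \<times> nat) set \<Rightarrow> (nat \<times> nat) set \<Rightarrow> bool" where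
  "nary_reducible n F E \<longleftrightarrow>
     (\<exists>g :: nat \<Rightarrow> nat list \<Rightarrow> nat. (\<forall>i<n. recfn n (g i)) \<and>
        (\<forall>xs. length xs = n \<longrightarrow>
           (\<forall>i j. i < j \<and> j < n \<longrightarrow> ((xs ! i, xs ! j) \<in> F \<longleftrightarrow> (g i xs, g j xs) \<in> E))))"

definition complete_under :: "nat \<Rightarrow> ((nat \<times> nat) set \<Rightarrow> bool) \<Rightarrow> (nat \<times> nat) set \<Rightarrow> bool" where
  "complete_under n C E \<longleftrightarrow> C E \<and> (\<forall>F. C F \<longrightarrow> nary_reducible n F E)"

end

theory Submission
  imports Defs
begin


lemma len1: "length xs = Suc 0 \<Longrightarrow> xs = [xs!0]"
  by (cases xs) auto
lemma len2: "length xs = 2 \<Longrightarrow> xs = [xs!0, xs!1]"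
  by (cases xs; cases "tl xs") auto
lemma len3: "length xs = 3 \<Longrightarrow> xs = [xs!0, xs!1, xs!2]"
  by (cases xs; cases "tl xs"; cases "tl (tl xs)") auto

lemma len2E: "length xs = 2 \<Longrightarrow> (\<And>a b. xs = [a,b] \<Longrightarrow> P) \<Longrightarrow> P"
  by (metis len2)
lemma len3E: "length xs = 3 \<Longrightarrow> (\<And>a b c. xs = [a,b,c] \<Longrightarrow> P) \<Longrightarrow> P"
  by (metis len3)
lemma len1E: "length xs = 1 \<Longrightarrow> (\<And>a. xs = [a] \<Longrightarrow> P) \<Longrightarrow> P"
  by (metis len1 One_nat_def)

lemma comp1: "recfn 1 h \<Longrightarrow> recfn k f \<Longrightarrow> recfn k (\<lambda>xs. h [f xs])"
proof -
  assume a: "recfn 1 h" "recfn k f"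
  have "recfn k (\<lambda>xs. h (map (\<lambda>i. (\<lambda>_. f) i xs) [0..<1]))"
    by (rule rf_comp) (use a in auto)
  then show ?thesis by simp
qed

lemma comp2: "recfn 2 h \<Longrightarrow> recfn k f \<Longrightarrow> recfn k g \<Longrightarrow> recfn k (\<lambda>xs. h [f xs, g xs])"
proof -
  assume a: "recfn 2 h" "recfn k f" "recfn k g"
  have "recfn k (\<lambda>xs. h (map (\<lambda>i. (\<lambda>i. if i = 0 then f else g) i xs) [0..<2]))"
    by (rule rf_comp) (use a in auto)
  then show ?thesis by (simp add: upt_rec)
qed

lemma comp3: "recfn 3 h \<Longrightarrow> recfn k f \<Longrightarrow> recfn k g \<Longrightarrow> recfn k u \<Longrightarrow> recfn k (\<lambda>xs. h [f xs, g xs, u xs])"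
proof -
  assume a: "recfn 3 h" "recfn k f" "recfn k g" "recfn k u"
  have "recfn k (\<lambda>xs. h (map (\<lambda>i. (\<lambda>i. if i = 0 then f else if i = 1 then g else u) i xs) [0..<3]))"
    by (rule rf_comp) (use a in auto)
  then show ?thesis by (simp add: upt_rec)
qed

lemma rf_ext': "recfn k f \<Longrightarrow> (\<And>xs. length xs = k \<Longrightarrow> g xs = f xs) \<Longrightarrow> recfn k g"
  using rf_ext by blast

lemma rf_const: "recfn k (\<lambda>xs. c)"
proof (induction c)
  case 0 then show ?case by (rule rf_zero)
next
  case (Suc c)
  have "recfn k (\<lambda>xs. (\<lambda>ys. Suc (hd ys)) [c])" by (rule comp1[OF rf_succ Suc])
  then show ?case by simp
qed

definition rc :: "(nat \<Rightarrow> nat) \<Rightarrow> bool" where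
  "rc f \<longleftrightarrow> recfn 1 (\<lambda>xs. f (hd xs))"

definition rc2 :: "(nat \<Rightarrow> nat \<Rightarrow> nat) \<Rightarrow> bool" where
  "rc2 f \<longleftrightarrow> recfn 2 (\<lambda>xs. f (xs!0) (xs!1))"

lemma rcE: "rc f \<Longrightarrow> recfn 1 (\<lambda>xs. f (xs!0))"
  unfolding rc_def by (erule rf_ext') (erule len1E, simp)

lemma rc_id: "rc (\<lambda>x. x)"
  unfolding rc_def by (rule rf_ext'[OF rf_proj[of 0 1]]) (simp, erule len1E, simp)

lemma rc_const: "rc (\<lambda>x. c)"
  unfolding rc_def by (rule rf_const)

lemma rc_Suc: "rc f \<Longrightarrow> rc (\<lambda>x. Suc (f x))"
  unfolding rc_def by (drule comp1[OF rf_succ]) simp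

lemma rc_rc2: "rc2 h \<Longrightarrow> rc f \<Longrightarrow> rc g \<Longrightarrow> rc (\<lambda>x. h (f x) (g x))"
  unfolding rc_def rc2_def by (drule comp2, assumption, assumption) simp

lemma recfn_rc: "rc h \<Longrightarrow> recfn k f \<Longrightarrow> recfn k (\<lambda>xs. h (f xs))"
  unfolding rc_def by (drule comp1, assumption) simp

lemma recfn_rc2: "rc2 h \<Longrightarrow> recfn k f \<Longrightarrow> recfn k g \<Longrightarrow> recfn k (\<lambda>xs. h (f xs) (g xs))"
  unfolding rc2_def by (drule comp2, assumption, assumption) simp

lemma rc_comp: "rc f \<Longrightarrow> rc g \<Longrightarrow> rc (\<lambda>x. f (g x))"
  unfolding rc_def by (drule comp1, assumption) simp

lemma rc2_swap: "rc2 h \<Longrightarrow> rc2 (\<lambda>a b. h b a)"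
  unfolding rc2_def
  by (rule rf_ext'[OF comp2[OF _ rf_proj[of 1 2] rf_proj[of 0 2]]]) auto

lemma rf_prim0: "recfn 0 f \<Longrightarrow> recfn 2 g \<Longrightarrow> recfn 1 (\<lambda>xs. rec_nat (f (tl xs)) (\<lambda>y r. g (y # r # tl xs)) (hd xs))"
  using rf_prim[of 0 f g] by (simp add: numeral_eq_Suc)
lemma rf_prim1: "recfn 1 f \<Longrightarrow> recfn 3 g \<Longrightarrow> recfn 2 (\<lambda>xs. rec_nat (f (tl xs)) (\<lambda>y r. g (y # r # tl xs)) (hd xs))"
  using rf_prim[of 1 f g] by (simp add: numeral_eq_Suc)
lemma rc_pred: "rc (\<lambda>x. x - 1)"
proof -
  have "recfn 1 (\<lambda>xs. rec_nat ((\<lambda>_. 0) (tl xs)) (\<lambda>y r. (\<lambda>zs. zs!0) (y # r # tl xs)) (hd xs))"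
    by (rule rf_prim0) (auto intro: rf_zero rf_proj)
  moreover have "rec_nat 0 (\<lambda>y r. y) n = n - 1" for n :: nat by (cases n) auto
  ultimately show ?thesis unfolding rc_def by simp
qed

lemma rec_add: "rec_nat b (\<lambda>y r. Suc r) a = a + (b::nat)" by (induction a) auto
lemma rec_sub: "rec_nat b (\<lambda>y r. r - Suc 0) a = b - (a::nat)" by (induction a) auto
lemma rec_mult: "rec_nat 0 (\<lambda>y r. r + b) a = a * (b::nat)" by (induction a) auto

lemma rc2_add: "rc2 (+)"
proof -
  have p: "recfn 3 (\<lambda>zs. Suc (zs!1))" using comp1[OF rf_succ rf_proj[of 1 3]] by simp
  have "recfn 2 (\<lambda>xs. rec_nat ((\<lambda>zs. zs!0) (tl xs)) (\<lambda>y r. (\<lambda>zs. Suc (zs!1)) (y # r # tl xs)) (hd xs))"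
    by (rule rf_prim1) (use p in \<open>auto intro: rf_proj\<close>)
  then show ?thesis unfolding rc2_def
    by (rule rf_ext') (erule len2E, simp add: rec_add)
qed

lemma rc2_sub: "rc2 (\<lambda>a b. b - a)"
proof -
  have p: "recfn 3 (\<lambda>zs. zs!1 - 1)" using recfn_rc[OF rc_pred rf_proj[of 1 3]] by simp
  have "recfn 2 (\<lambda>xs. rec_nat ((\<lambda>zs. zs!0) (tl xs)) (\<lambda>y r. (\<lambda>zs. zs!1 - 1) (y # r # tl xs)) (hd xs))"
    by (rule rf_prim1) (use p in \<open>auto intro: rf_proj\<close>)
  then show ?thesis unfolding rc2_def
    by (rule rf_ext') (erule len2E, simp add: rec_sub)
qed

lemma rc2_minus: "rc2 (-)"
  using rc2_swap[OF rc2_sub] by simp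

lemma rc2_mult: "rc2 (*)"
proof -
  have p: "recfn 3 (\<lambda>zs. zs!1 + zs!2)" using recfn_rc2[OF rc2_add rf_proj[of 1 3] rf_proj[of 2 3]] by simp
  have "recfn 2 (\<lambda>xs. rec_nat ((\<lambda>zs. 0) (tl xs)) (\<lambda>y r. (\<lambda>zs. zs!1 + zs!2) (y # r # tl xs)) (hd xs))"
    by (rule rf_prim1) (use p in \<open>auto intro: rf_zero\<close>)
  then show ?thesis unfolding rc2_def
    by (rule rf_ext') (erule len2E, simp add: rec_mult)
qed

lemma rc_add: "rc f \<Longrightarrow> rc g \<Longrightarrow> rc (\<lambda>x. f x + g x)" using rc_rc2[OF rc2_add] .
lemma rc_minus: "rc f \<Longrightarrow> rc g \<Longrightarrow> rc (\<lambda>x. f x - g x)" using rc_rc2[OF rc2_minus] .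
lemma rc_mult: "rc f \<Longrightarrow> rc g \<Longrightarrow> rc (\<lambda>x. f x * g x)" using rc_rc2[OF rc2_mult] .


lemma rc_cong: "rc f \<Longrightarrow> (\<And>x. g x = f x) \<Longrightarrow> rc g"
proof -
  assume "rc f" "\<And>x. g x = f x"
  then have "g = f" by auto
  with \<open>rc f\<close> show ?thesis by simp
qed

lemma rec_tri: "rec_nat 0 (\<lambda>y r. Suc (r + y)) n = triangle n" by (induction n) auto

lemma rc_triangle: "rc triangle"
proof -
  have g: "recfn 2 (\<lambda>zs. zs!1 + Suc (zs!0))"
    using recfn_rc2[OF rc2_add rf_proj[of 1 2] comp1[OF rf_succ rf_proj[of 0 2]]] by simp
  have "recfn 1 (\<lambda>xs. rec_nat ((\<lambda>_. 0) (tl xs)) (\<lambda>y r. (\<lambda>zs. zs!1 + Suc (zs!0)) (y # r # tl xs)) (hd xs))"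
    by (rule rf_prim0[OF rf_zero g])
  then show ?thesis unfolding rc_def by (simp add: rec_tri)
qed

lemma rc2_pe: "rc2 (\<lambda>a b. prod_encode (a, b))"
proof -
  have "recfn 2 (\<lambda>xs. triangle (xs!0 + xs!1) + xs!0)"
    by (rule recfn_rc2[OF rc2_add recfn_rc[OF rc_triangle recfn_rc2[OF rc2_add rf_proj rf_proj]] rf_proj]) auto
  then show ?thesis unfolding rc2_def by (simp add: prod_encode_def)
qed

lemma rc_pe: "rc f \<Longrightarrow> rc g \<Longrightarrow> rc (\<lambda>x. prod_encode (f x, g x))"
  using rc_rc2[OF rc2_pe] .

lemma rc_mu2: "rc2 f \<Longrightarrow> (\<And>x. \<exists>y. f y x = 0) \<Longrightarrow> rc (\<lambda>x. LEAST y. f y x = 0)"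
proof -
  assume a: "rc2 f" "\<And>x. \<exists>y. f y x = 0"
  have m: "recfn (1+1) (\<lambda>zs. f (zs!0) (zs!1))" using a(1) unfolding rc2_def by (simp add: numeral_2_eq_2)
  have ex: "\<forall>xs. length xs = 1 \<longrightarrow> (\<exists>y. (\<lambda>zs. f (zs!0) (zs!1)) (y#xs) = 0)"
  proof (intro allI impI)
    fix xs :: "nat list" assume "length xs = 1"
    then obtain c where "xs = [c]" by (rule len1E)
    then show "\<exists>y. (\<lambda>zs. f (zs!0) (zs!1)) (y#xs) = 0" using a(2)[of c] by simp
  qed
  have "recfn 1 (\<lambda>xs. LEAST y. (\<lambda>zs. f (zs!0) (zs!1)) (y # xs) = 0)"
    by (rule rf_mu[OF m ex])
  then show ?thesis unfolding rc_def
    by (rule rf_ext') (erule len1E, simp)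
qed

definition pfst :: "nat \<Rightarrow> nat" where "pfst z = fst (prod_decode z)"
definition psnd :: "nat \<Rightarrow> nat" where "psnd z = snd (prod_decode z)"

lemma pfst_pe[simp]: "pfst (prod_encode (a,b)) = a" by (simp add: pfst_def)
lemma psnd_pe[simp]: "psnd (prod_encode (a,b)) = b" by (simp add: psnd_def)
lemma pe_split[simp]: "prod_encode (pfst z, psnd z) = z" by (simp add: pfst_def psnd_def)

lemma triangle_mono: "a \<le> b \<Longrightarrow> triangle a \<le> triangle b"
  by (induction b) (auto simp: le_Suc_eq)

definition diag :: "nat \<Rightarrow> nat" where "diag z = (LEAST s. z < triangle (Suc s))"

lemma diag_eq: "diag (prod_encode (a,b)) = a + b"
proof -
  have "(LEAST s. triangle (a+b) + a < triangle (Suc s)) = a + b"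
  proof (rule Least_equality)
    show "triangle (a + b) + a < triangle (Suc (a + b))" by simp
    fix s assume h: "triangle (a + b) + a < triangle (Suc s)"
    show "a + b \<le> s"
    proof (rule ccontr)
      assume "\<not> a + b \<le> s"
      then have "Suc s \<le> a + b" by simp
      then have "triangle (Suc s) \<le> triangle (a + b)" by (rule triangle_mono)
      then show False using h by simp
    qed
  qed
  then show ?thesis by (simp add: diag_def prod_encode_def)
qed

lemma diag_alt: "diag z = pfst z + psnd z"
  using diag_eq[of "pfst z" "psnd z"] by simp
lemma z_alt: "z = triangle (pfst z + psnd z) + pfst z"
proof -
  have "prod_encode (pfst z, psnd z) = z" by simp
  then show ?thesis unfolding prod_encode_def by simp
qed
lemma pfst_alt: "pfst z = z - triangle (diag z)"
  using z_alt[of z] diag_alt[of z] by simp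
lemma psnd_alt: "psnd z = diag z - pfst z"
  using diag_alt[of z] by simp

lemma rc_diag: "rc diag"
proof -
  have r: "rc2 (\<lambda>y x. 1 - (triangle (Suc y) - x))"
    unfolding rc2_def
    by (rule recfn_rc2[OF rc2_minus rf_const recfn_rc2[OF rc2_minus recfn_rc[OF rc_triangle] rf_proj]])
       (auto intro: comp1[OF rf_succ rf_proj, simplified])
  have e: "\<exists>y. 1 - (triangle (Suc y) - x) = 0" for x
  proof -
    have "x \<le> triangle x" by (induction x) auto
    then show ?thesis by (intro exI[of _ x]) simp
  qed
  have "rc (\<lambda>x. LEAST y. 1 - (triangle (Suc y) - x) = 0)" by (rule rc_mu2[OF r e])
  then show ?thesis unfolding diag_def
    by (rule rc_cong) (rule arg_cong[where f=Least], auto)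
qed

lemma rc_pfst0: "rc pfst"
  by (rule rc_cong[OF rc_minus[OF rc_id rc_comp[OF rc_triangle rc_diag]]]) (simp add: pfst_alt)
lemma rc_psnd0: "rc psnd"
  by (rule rc_cong[OF rc_minus[OF rc_diag rc_pfst0]]) (simp add: psnd_alt)

lemma rc_pfst: "rc f \<Longrightarrow> rc (\<lambda>x. pfst (f x))" using rc_comp[OF rc_pfst0] .
lemma rc_psnd: "rc f \<Longrightarrow> rc (\<lambda>x. psnd (f x))" using rc_comp[OF rc_psnd0] .

lemma rc_rec:
  assumes b: "rc b" and N: "rc N" and s: "rc (\<lambda>w. s (pfst w) (pfst (psnd w)) (psnd (psnd w)))"
  shows "rc (\<lambda>x. rec_nat (b x) (\<lambda>n acc. s x n acc) (N x))"
proof -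
  let ?S = "\<lambda>w. s (pfst w) (pfst (psnd w)) (psnd (psnd w))"
  have g: "recfn 3 (\<lambda>xs. ?S (prod_encode (xs!2, prod_encode (xs!0, xs!1))))"
    by (rule recfn_rc[OF s recfn_rc2[OF rc2_pe rf_proj recfn_rc2[OF rc2_pe rf_proj rf_proj]]]) auto
  have H: "recfn 2 (\<lambda>xs. rec_nat ((\<lambda>zs. b (zs!0)) (tl xs)) (\<lambda>y r. (\<lambda>xs. ?S (prod_encode (xs!2, prod_encode (xs!0, xs!1)))) (y # r # tl xs)) (hd xs))"
    by (rule rf_prim1[OF rcE[OF b] g])
  have "recfn 1 (\<lambda>xs. (\<lambda>xs. rec_nat ((\<lambda>zs. b (zs!0)) (tl xs)) (\<lambda>y r. (\<lambda>xs. ?S (prod_encode (xs!2, prod_encode (xs!0, xs!1)))) (y # r # tl xs)) (hd xs)) [N (hd xs), hd xs])"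
    by (rule comp2[OF H N[unfolded rc_def] rc_id[unfolded rc_def]])
  then show ?thesis unfolding rc_def by simp
qed

lemma rc_mu:
  assumes f: "rc (\<lambda>w. f (pfst w) (psnd w))" and e: "\<And>x. \<exists>y. f x y = 0"
  shows "rc (\<lambda>x. LEAST y. f x y = 0)"
proof -
  have "rc2 (\<lambda>y x. f x y)"
    using recfn_rc[OF f recfn_rc2[OF rc2_pe rf_proj[of 1 2] rf_proj[of 0 2]]] unfolding rc2_def by simp
  then show ?thesis using rc_mu2[of "\<lambda>y x. f x y"] e by simp
qed

lemma funpow_rec: "(f ^^ n) a = rec_nat a (\<lambda>_ r. f r) n" by (induction n) auto

lemma rc_funpow:
  assumes "rc (\<lambda>w. st (pfst w) (psnd w))" "rc N" "rc b"
  shows "rc (\<lambda>x. (st x ^^ N x) (b x))"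
proof -
  have "rc (\<lambda>x. rec_nat (b x) (\<lambda>n acc. st x acc) (N x))"
    by (rule rc_rec[OF assms(3,2)]) (rule rc_cong[OF rc_comp[OF assms(1) rc_pe[OF rc_pfst[OF rc_id] rc_psnd[OF rc_psnd[OF rc_id]]]]], simp)
  then show ?thesis by (simp add: funpow_rec)
qed

definition rcp :: "(nat \<Rightarrow> bool) \<Rightarrow> bool" where
  "rcp P \<longleftrightarrow> rc (\<lambda>x. if P x then 1 else 0)"

lemma rc_if: "rcp P \<Longrightarrow> rc f \<Longrightarrow> rc g \<Longrightarrow> rc (\<lambda>x. if P x then f x else g x)"
proof -
  assume a: "rcp P" "rc f" "rc g"
  let ?c = "\<lambda>x. if P x then 1 else 0 :: nat"
  have c: "rc ?c" using a(1) unfolding rcp_def .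
  show ?thesis
    by (rule rc_cong[OF rc_add[OF rc_mult[OF c a(2)] rc_mult[OF rc_minus[OF rc_const[of 1] c] a(3)]]]) simp
qed


lemma rcpI: "rc (\<lambda>x. if P x then 1 else 0) \<Longrightarrow> rcp P" unfolding rcp_def .
lemma rcpD: "rcp P \<Longrightarrow> rc (\<lambda>x. if P x then 1 else 0)" unfolding rcp_def .

lemma rcp_eq: "rc f \<Longrightarrow> rc g \<Longrightarrow> rcp (\<lambda>x. f x = g x)"
proof -
  assume f: "rc f" and g: "rc g"
  show ?thesis
    by (rule rcpI, rule rc_cong[OF rc_minus[OF rc_const[of 1] rc_add[OF rc_minus[OF f g] rc_minus[OF g f]]]]) auto
qed

lemma rcp_less: "rc f \<Longrightarrow> rc g \<Longrightarrow> rcp (\<lambda>x. f x < g x)"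
proof -
  assume f: "rc f" and g: "rc g"
  show ?thesis
    by (rule rcpI, rule rc_cong[OF rc_minus[OF rc_const[of 1] rc_minus[OF rc_const[of 1] rc_minus[OF g f]]]]) auto
qed

lemma rcp_le: "rc f \<Longrightarrow> rc g \<Longrightarrow> rcp (\<lambda>x. f x \<le> g x)"
proof -
  assume "rc f" "rc g"
  then have "rcp (\<lambda>x. f x < Suc (g x))" by (intro rcp_less rc_Suc)
  then show ?thesis by (simp add: less_Suc_eq_le)
qed

lemma rcp_not: "rcp P \<Longrightarrow> rcp (\<lambda>x. \<not> P x)"
  by (rule rcpI, rule rc_cong[OF rc_minus[OF rc_const[of 1] rcpD]]) auto

lemma rcp_and: "rcp P \<Longrightarrow> rcp Q \<Longrightarrow> rcp (\<lambda>x. P x \<and> Q x)"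
proof -
  assume p: "rcp P" and q: "rcp Q"
  show ?thesis by (rule rcpI, rule rc_cong[OF rc_mult[OF rcpD[OF p] rcpD[OF q]]]) auto
qed

lemma rcp_or: "rcp P \<Longrightarrow> rcp Q \<Longrightarrow> rcp (\<lambda>x. P x \<or> Q x)"
proof -
  assume p: "rcp P" and q: "rcp Q"
  show ?thesis
    by (rule rcpI, rule rc_cong[OF rc_minus[OF rc_const[of 1] rc_mult[OF rc_minus[OF rc_const[of 1] rcpD[OF p]] rc_minus[OF rc_const[of 1] rcpD[OF q]]]]]) auto
qed

lemma rcp_imp: "rcp P \<Longrightarrow> rcp Q \<Longrightarrow> rcp (\<lambda>x. P x \<longrightarrow> Q x)"
proof -
  assume "rcp P" "rcp Q"
  then have "rcp (\<lambda>x. \<not> P x \<or> Q x)" by (intro rcp_or rcp_not)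
  then show ?thesis by simp
qed

lemma rcp_const: "rcp (\<lambda>x. P)"
  by (rule rcpI) (cases P, auto intro: rc_const)

lemma rcp_cong: "rcp P \<Longrightarrow> (\<And>x. Q x = P x) \<Longrightarrow> rcp Q"
proof -
  assume "rcp P" "\<And>x. Q x = P x"
  then have "Q = P" by auto
  with \<open>rcp P\<close> show ?thesis by simp
qed

definition cnt :: "(nat \<Rightarrow> nat \<Rightarrow> bool) \<Rightarrow> nat \<Rightarrow> nat \<Rightarrow> nat" where
  "cnt P x n = rec_nat 0 (\<lambda>y acc. acc + (if P x y then 1 else 0)) n"

lemma cnt_pos: "0 < cnt P x n \<longleftrightarrow> (\<exists>y<n. P x y)"
  by (induction n) (auto simp: cnt_def less_Suc_eq)

lemma rcp_bex:
  assumes P: "rcp (\<lambda>w. P (pfst w) (psnd w))" and B: "rc B"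
  shows "rcp (\<lambda>x. \<exists>y<B x. P x y)"
proof -
  have c: "rc (\<lambda>w. if P (pfst w) (psnd w) then 1 else 0)" using rcpD[OF P] .
  have s: "rc (\<lambda>w. psnd (psnd w) + (if P (pfst w) (pfst (psnd w)) then 1 else 0))"
    by (rule rc_add[OF rc_psnd[OF rc_psnd[OF rc_id]] rc_cong[OF rc_comp[OF c rc_pe[OF rc_pfst[OF rc_id] rc_pfst[OF rc_psnd[OF rc_id]]]]]]) simp
  have "rc (\<lambda>x. cnt P x (B x))"
    unfolding cnt_def by (rule rc_rec[OF rc_const B s])
  then have "rcp (\<lambda>x. 0 < cnt P x (B x))" by (intro rcp_less rc_const)
  then show ?thesis by (simp add: cnt_pos)
qed

lemma rcp_ball:
  assumes P: "rcp (\<lambda>w. P (pfst w) (psnd w))" and B: "rc B"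
  shows "rcp (\<lambda>x. \<forall>y<B x. P x y)"
proof -
  have "rcp (\<lambda>x. \<not> (\<exists>y<B x. \<not> P x y))"
    by (intro rcp_not rcp_bex[OF _ B] rcp_not P)
  then show ?thesis by simp
qed

lemma rcp_bex_le:
  assumes P: "rcp (\<lambda>w. P (pfst w) (psnd w))" and B: "rc B"
  shows "rcp (\<lambda>x. \<exists>y\<le>B x. P x y)"
proof -
  have "rcp (\<lambda>x. \<exists>y<Suc (B x). P x y)" by (rule rcp_bex[OF P rc_Suc[OF B]])
  then show ?thesis by (simp add: less_Suc_eq_le)
qed

lemma rcp_ball_le:
  assumes P: "rcp (\<lambda>w. P (pfst w) (psnd w))" and B: "rc B"
  shows "rcp (\<lambda>x. \<forall>y\<le>B x. P x y)"
proof -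
  have "rcp (\<lambda>x. \<forall>y<Suc (B x). P x y)" by (rule rcp_ball[OF P rc_Suc[OF B]])
  then show ?thesis by (simp add: less_Suc_eq_le)
qed

lemma rc_pred': "rc f \<Longrightarrow> rc (\<lambda>x. f x - 1)" by (rule rc_minus[OF _ rc_const])

definition cons_c :: "nat \<Rightarrow> nat \<Rightarrow> nat" where "cons_c x xs = Suc (prod_encode (x, xs))"
definition hd_c :: "nat \<Rightarrow> nat" where "hd_c X = pfst (X - 1)"
definition tl_c :: "nat \<Rightarrow> nat" where "tl_c X = psnd (X - 1)"
definition nth_c :: "nat \<Rightarrow> nat \<Rightarrow> nat" where "nth_c X i = hd_c ((tl_c ^^ i) X)"
definition len_c :: "nat \<Rightarrow> nat" where "len_c X = (LEAST n. (tl_c ^^ n) X = 0)"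
definition mem_c :: "nat \<Rightarrow> nat \<Rightarrow> bool" where "mem_c q L = (\<exists>i<len_c L. nth_c L i = q)"

primrec lc :: "nat list \<Rightarrow> nat" where
  "lc [] = 0" | "lc (x # xs) = cons_c x (lc xs)"

lemma hd_cons[simp]: "hd_c (cons_c x xs) = x" by (simp add: hd_c_def cons_c_def)
lemma tl_cons[simp]: "tl_c (cons_c x xs) = xs" by (simp add: tl_c_def cons_c_def)
lemma cons_nz[simp]: "cons_c x xs \<noteq> 0" by (simp add: cons_c_def)

lemma pe_ge1: "a \<le> prod_encode (a, b)" by (simp add: prod_encode_def)
lemma pe_ge2: "b \<le> prod_encode (a, b)"
proof -
  have t: "n \<le> triangle n" for n by (induction n) auto
  have "a + b \<le> triangle (a + b)" by (rule t)
  then show ?thesis by (simp add: prod_encode_def)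
qed
lemma pe_mono1: "a < a' \<Longrightarrow> prod_encode (a, b) < prod_encode (a', b)"
proof -
  assume "a < a'"
  then have "triangle (a + b) \<le> triangle (a' + b)" by (intro triangle_mono) simp
  with \<open>a < a'\<close> show ?thesis by (simp add: prod_encode_def)
qed

lemma cons_split: "X \<noteq> 0 \<Longrightarrow> cons_c (hd_c X) (tl_c X) = X"
  by (simp add: cons_c_def hd_c_def tl_c_def)

lemma hd_lt: "X \<noteq> 0 \<Longrightarrow> hd_c X < X"
  using pe_ge1[of "hd_c X" "tl_c X"] cons_split[of X] unfolding cons_c_def by simp
lemma tl_lt: "X \<noteq> 0 \<Longrightarrow> tl_c X < X"
  using pe_ge2[of "tl_c X" "hd_c X"] cons_split[of X] unfolding cons_c_def by simp

lemma lc_surj: "\<exists>xs. X = lc xs"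
proof (induction X rule: less_induct)
  case (less X)
  show ?case
  proof (cases "X = 0")
    case True then show ?thesis by (intro exI[of _ "[]"]) simp
  next
    case False
    then obtain ys where "tl_c X = lc ys" using less tl_lt by blast
    then have "X = lc (hd_c X # ys)" using cons_split[OF False] by simp
    then show ?thesis ..
  qed
qed

lemma tl_zero[simp]: "tl_c 0 = 0"
  by (simp add: tl_c_def psnd_def prod_decode_def prod_decode_aux.simps)
lemma tl_lc0: "tl_c (lc xs) = lc (tl xs)" by (cases xs) auto
lemma tl_funpow_lc: "(tl_c ^^ i) (lc xs) = lc (drop i xs)"
  by (induction i) (auto simp: tl_lc0 drop_Suc tl_drop)

lemma lc_zero: "lc xs = 0 \<longleftrightarrow> xs = []" by (cases xs) auto

lemma nth_lc[simp]: "i < length xs \<Longrightarrow> nth_c (lc xs) i = xs ! i"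
  unfolding nth_c_def tl_funpow_lc by (simp add: Cons_nth_drop_Suc[symmetric])

lemma len_lc[simp]: "len_c (lc xs) = length xs"
  unfolding len_c_def tl_funpow_lc lc_zero
  by (rule Least_equality) auto

lemma mem_lc[simp]: "mem_c q (lc xs) \<longleftrightarrow> q \<in> set xs"
  unfolding mem_c_def by (auto simp: in_set_conv_nth)

lemma hd_lc[simp]: "xs \<noteq> [] \<Longrightarrow> hd_c (lc xs) = hd xs" by (cases xs) auto
lemma tl_lc[simp]: "tl_c (lc xs) = lc (tl xs)" by (rule tl_lc0)

lemma rc_cons: "rc f \<Longrightarrow> rc g \<Longrightarrow> rc (\<lambda>x. cons_c (f x) (g x))"
  unfolding cons_c_def by (intro rc_Suc rc_pe)
lemma rc_hd: "rc f \<Longrightarrow> rc (\<lambda>x. hd_c (f x))"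
  unfolding hd_c_def by (intro rc_pfst rc_pred')
lemma rc_tl: "rc f \<Longrightarrow> rc (\<lambda>x. tl_c (f x))"
  unfolding tl_c_def by (intro rc_psnd rc_pred')
lemma rc_nth: "rc f \<Longrightarrow> rc g \<Longrightarrow> rc (\<lambda>x. nth_c (f x) (g x))"
  unfolding nth_c_def
  by (intro rc_hd rc_funpow[where st="\<lambda>_. tl_c"] rc_tl rc_psnd rc_id)
lemma rc_len: "rc f \<Longrightarrow> rc (\<lambda>x. len_c (f x))"
proof -
  assume f: "rc f"
  have "rc (\<lambda>x. LEAST n. (if (tl_c ^^ n) x = 0 then 0 else 1) = (0::nat))"
  proof (rule rc_mu)
    show "rc (\<lambda>w. if (tl_c ^^ psnd w) (pfst w) = 0 then 0 else 1)"
      by (intro rc_if rcp_eq rc_funpow[where st="\<lambda>_. tl_c"] rc_tl rc_psnd rc_pfst rc_id rc_const)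
    fix x
    obtain xs where "x = lc xs" using lc_surj by blast
    then show "\<exists>y. (if (tl_c ^^ y) x = 0 then 0 else 1) = (0::nat)"
      by (intro exI[of _ "length xs"]) (simp add: tl_funpow_lc)
  qed
  then have "rc len_c" unfolding len_c_def by (rule rc_cong) (rule arg_cong[where f=Least], auto)
  then show ?thesis using rc_comp f by blast
qed
lemma rcp_mem: "rc f \<Longrightarrow> rc g \<Longrightarrow> rcp (\<lambda>x. mem_c (f x) (g x))"
proof -
  assume f: "rc f" and g: "rc g"
  have f': "rc (\<lambda>w. f (pfst w))" by (rule rc_comp[OF f rc_pfst[OF rc_id]])
  have g': "rc (\<lambda>w. g (pfst w))" by (rule rc_comp[OF g rc_pfst[OF rc_id]])
  show ?thesis
    unfolding mem_c_def
    by (rule rcp_bex[OF rcp_eq[OF rc_nth[OF g' rc_psnd[OF rc_id]] f'] rc_len[OF g]])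
qed

lemmas rc_intros = rc_id rc_const rc_Suc rc_add rc_minus rc_mult rc_pe rc_pfst rc_psnd rc_if
  rcp_eq rcp_less rcp_le rcp_not rcp_and rcp_or rcp_imp rcp_const rcp_bex rcp_ball rcp_bex_le rcp_ball_le
  rc_cons rc_hd rc_tl rc_nth rc_len rcp_mem


definition fc :: "nat \<Rightarrow> nat \<Rightarrow> nat \<Rightarrow> nat" where
  "fc P X v = prod_encode (P, prod_encode (X, v))"

lemma fc_inj[simp]: "fc P X v = fc P' X' v' \<longleftrightarrow> P = P' \<and> X = X' \<and> v = v'"
  unfolding fc_def by (metis pfst_pe psnd_pe)

lemma fc_dec[simp]: "pfst (fc P X v) = P" "pfst (psnd (fc P X v)) = X" "psnd (psnd (fc P X v)) = v"
  by (simp_all add: fc_def)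

inductive ev_c :: "nat \<Rightarrow> nat \<Rightarrow> nat \<Rightarrow> bool" where
  e0: "pfst P = 0 \<Longrightarrow> ev_c P X 0"
| e1: "pfst P = 1 \<Longrightarrow> ev_c P X (Suc (hd_c X))"
| e2: "pfst P = 2 \<Longrightarrow> ev_c P X (nth_c X (psnd P))"
| e3: "pfst P = 3 \<Longrightarrow> ev_c (pfst (psnd P)) Y v \<Longrightarrow> len_c Y = len_c (psnd (psnd P))
        \<Longrightarrow> (\<forall>j<len_c (psnd (psnd P)). ev_c (nth_c (psnd (psnd P)) j) X (nth_c Y j)) \<Longrightarrow> ev_c P X v"
| e4a: "pfst P = 4 \<Longrightarrow> X \<noteq> 0 \<Longrightarrow> hd_c X = 0 \<Longrightarrow> ev_c (pfst (psnd P)) (tl_c X) v \<Longrightarrow> ev_c P X v"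
| e4b: "pfst P = 4 \<Longrightarrow> X \<noteq> 0 \<Longrightarrow> hd_c X = Suc m \<Longrightarrow> ev_c P (cons_c m (tl_c X)) r
        \<Longrightarrow> ev_c (psnd (psnd P)) (cons_c m (cons_c r (tl_c X))) v \<Longrightarrow> ev_c P X v"
| e5: "pfst P = 5 \<Longrightarrow> ev_c (psnd P) (cons_c v X) 0 \<Longrightarrow> (\<forall>y<v. \<exists>r. r \<noteq> 0 \<and> ev_c (psnd P) (cons_c y X) r) \<Longrightarrow> ev_c P X v"

lemma inv0: "pfst P = 0 \<Longrightarrow> ev_c P X v \<longleftrightarrow> v = 0"
  by (rule iffI, (erule ev_c.cases; simp), simp add: e0)
lemma inv1: "pfst P = 1 \<Longrightarrow> ev_c P X v \<longleftrightarrow> v = Suc (hd_c X)"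
  by (rule iffI, (erule ev_c.cases; simp), simp add: e1)
lemma inv2: "pfst P = 2 \<Longrightarrow> ev_c P X v \<longleftrightarrow> v = nth_c X (psnd P)"
  by (rule iffI, (erule ev_c.cases; simp), simp add: e2)
lemma inv3: "pfst P = 3 \<Longrightarrow> ev_c P X v \<longleftrightarrow> (\<exists>Y. ev_c (pfst (psnd P)) Y v \<and> len_c Y = len_c (psnd (psnd P))
        \<and> (\<forall>j<len_c (psnd (psnd P)). ev_c (nth_c (psnd (psnd P)) j) X (nth_c Y j)))"
  by (rule iffI, (erule ev_c.cases; simp; blast), blast intro: e3)
lemma inv4: "pfst P = 4 \<Longrightarrow> ev_c P X v \<longleftrightarrow> X \<noteq> 0 \<and> ((hd_c X = 0 \<and> ev_c (pfst (psnd P)) (tl_c X) v) \<or>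
     (\<exists>m r. hd_c X = Suc m \<and> ev_c P (cons_c m (tl_c X)) r \<and> ev_c (psnd (psnd P)) (cons_c m (cons_c r (tl_c X))) v))"
  by (rule iffI, (erule ev_c.cases; simp; blast), blast intro: e4a e4b)
lemma inv5: "pfst P = 5 \<Longrightarrow> ev_c P X v \<longleftrightarrow> ev_c (psnd P) (cons_c v X) 0 \<and> (\<forall>y<v. \<exists>r. r \<noteq> 0 \<and> ev_c (psnd P) (cons_c y X) r)"
  by (rule iffI, (erule ev_c.cases; simp; blast), blast intro: e5)

definition justS :: "nat set \<Rightarrow> nat \<Rightarrow> nat \<Rightarrow> nat \<Rightarrow> bool" where
  "justS S P X v \<longleftrightarrow>
     (pfst P = 0 \<and> v = 0) \<or> (pfst P = 1 \<and> v = Suc (hd_c X)) \<or> (pfst P = 2 \<and> v = nth_c X (psnd P))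
   \<or> (pfst P = 3 \<and> (\<exists>Y. fc (pfst (psnd P)) Y v \<in> S \<and> len_c Y = len_c (psnd (psnd P))
        \<and> (\<forall>j<len_c (psnd (psnd P)). fc (nth_c (psnd (psnd P)) j) X (nth_c Y j) \<in> S)))
   \<or> (pfst P = 4 \<and> X \<noteq> 0 \<and> hd_c X = 0 \<and> fc (pfst (psnd P)) (tl_c X) v \<in> S)
   \<or> (pfst P = 4 \<and> X \<noteq> 0 \<and> hd_c X \<noteq> 0 \<and> (\<exists>r. fc P (cons_c (hd_c X - 1) (tl_c X)) r \<in> S
        \<and> fc (psnd (psnd P)) (cons_c (hd_c X - 1) (cons_c r (tl_c X))) v \<in> S))
   \<or> (pfst P = 5 \<and> fc (psnd P) (cons_c v X) 0 \<in> S \<and> (\<forall>y<v. \<exists>r. r \<noteq> 0 \<and> fc (psnd P) (cons_c y X) r \<in> S))"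

definition closedS :: "nat set \<Rightarrow> bool" where
  "closedS S \<longleftrightarrow> (\<forall>q\<in>S. justS S (pfst q) (pfst (psnd q)) (psnd (psnd q)))"

lemma justS_mono: "justS S P X v \<Longrightarrow> S \<subseteq> S' \<Longrightarrow> justS S' P X v"
  unfolding justS_def by blast

lemma closedS_Union: "\<forall>S\<in>A. closedS S \<Longrightarrow> closedS (\<Union>A)"
  unfolding closedS_def using justS_mono by (meson Union_iff Union_upper)

lemma closedS_insert: "closedS S \<Longrightarrow> justS S P X v \<Longrightarrow> closedS (insert (fc P X v) S)"
  unfolding closedS_def by (auto intro: justS_mono[OF _ subset_insertI])

lemma pfst_le: "pfst z \<le> z" using pe_ge1[of "pfst z" "psnd z"] by simp
lemma psnd_le: "psnd z \<le> z" using pe_ge2[of "psnd z" "pfst z"] by simp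
lemma psnd_lt: "pfst z \<noteq> 0 \<Longrightarrow> psnd z < z"
proof -
  assume "pfst z \<noteq> 0"
  have t: "n \<le> triangle n" for n by (induction n) auto
  have "psnd z \<le> triangle (pfst z + psnd z)" using t[of "pfst z + psnd z"] by linarith
  then show ?thesis using z_alt[of z] \<open>pfst z \<noteq> 0\<close> by linarith
qed

lemma elem_lt: "q \<in> set xs \<Longrightarrow> q < lc xs"
proof (induction xs)
  case Nil then show ?case by simp
next
  case (Cons a xs)
  have "a \<le> prod_encode (a, lc xs)" "lc xs \<le> prod_encode (a, lc xs)" by (rule pe_ge1, rule pe_ge2)
  with Cons show ?case by (auto simp: cons_c_def)
qed

lemma nth_lt: "j < len_c X \<Longrightarrow> nth_c X j < X"
proof -
  assume j: "j < len_c X"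
  obtain xs where X: "X = lc xs" using lc_surj by blast
  with j show ?thesis by (auto intro!: elem_lt)
qed

lemma sound:
  assumes cl: "closedS S"
  shows "fc P X v \<in> S \<Longrightarrow> ev_c P X v"
proof (induction P arbitrary: X v rule: less_induct)
  case (less P)
  note IHP = less.IH
  show ?case using less.prems
  proof (induction X arbitrary: v rule: less_induct)
    case (less X)
    note IHX = less.IH
    have j: "justS S P X v" using cl less.prems unfolding closedS_def by (metis fc_dec)
    have lt: "pfst P \<noteq> 0 \<Longrightarrow> psnd P < P" by (rule psnd_lt)
    from j[unfolded justS_def] show ?case
    proof (elim disjE conjE exE)
      assume "pfst P = 0" "v = 0" then show ?thesis by (simp add: e0)
    next
      assume "pfst P = 1" "v = Suc (hd_c X)" then show ?thesis by (simp add: e1)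
    next
      assume "pfst P = 2" "v = nth_c X (psnd P)" then show ?thesis by (simp add: e2)
    next
      fix Y assume t: "pfst P = 3" and h1: "fc (pfst (psnd P)) Y v \<in> S" and h2: "len_c Y = len_c (psnd (psnd P))"
        and h3: "\<forall>j<len_c (psnd (psnd P)). fc (nth_c (psnd (psnd P)) j) X (nth_c Y j) \<in> S"
      have p: "psnd P < P" using lt t by simp
      have p1: "pfst (psnd P) < P" using p pfst_le[of "psnd P"] by linarith
      have a: "ev_c (pfst (psnd P)) Y v" by (rule IHP[OF p1 h1])
      have b: "\<forall>j<len_c (psnd (psnd P)). ev_c (nth_c (psnd (psnd P)) j) X (nth_c Y j)"
      proof (intro allI impI)
        fix j assume jl: "j < len_c (psnd (psnd P))"
        then have "nth_c (psnd (psnd P)) j < psnd (psnd P)" by (rule nth_lt)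
        then have q: "nth_c (psnd (psnd P)) j < P" using p psnd_le[of "psnd P"] by linarith
        have "fc (nth_c (psnd (psnd P)) j) X (nth_c Y j) \<in> S" using h3 jl by blast
        then show "ev_c (nth_c (psnd (psnd P)) j) X (nth_c Y j)" by (rule IHP[OF q])
      qed
      show ?thesis by (rule e3[OF t a h2 b])
    next
      assume t: "pfst P = 4" "X \<noteq> 0" "hd_c X = 0" and h: "fc (pfst (psnd P)) (tl_c X) v \<in> S"
      have "pfst (psnd P) < P" using lt t pfst_le[of "psnd P"] by simp
      then have "ev_c (pfst (psnd P)) (tl_c X) v" using IHP h by blast
      then show ?thesis by (rule e4a[OF t])
    next
      fix r assume t: "pfst P = 4" "X \<noteq> 0" "hd_c X \<noteq> 0" and h1: "fc P (cons_c (hd_c X - 1) (tl_c X)) r \<in> S"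
        and h2: "fc (psnd (psnd P)) (cons_c (hd_c X - 1) (cons_c r (tl_c X))) v \<in> S"
      have "psnd (psnd P) < P" using lt t psnd_le[of "psnd P"] by simp
      then have a: "ev_c (psnd (psnd P)) (cons_c (hd_c X - 1) (cons_c r (tl_c X))) v" using IHP h2 by blast
      have "cons_c (hd_c X - 1) (tl_c X) < cons_c (hd_c X) (tl_c X)"
        unfolding cons_c_def using pe_mono1[of "hd_c X - 1" "hd_c X" "tl_c X"] t by simp
      then have "cons_c (hd_c X - 1) (tl_c X) < X" using cons_split[OF t(2)] by simp
      then have b: "ev_c P (cons_c (hd_c X - 1) (tl_c X)) r" using IHX h1 by blast
      show ?thesis by (rule e4b[OF t(1) t(2) _ b a]) (use t in simp)
    next
      assume t: "pfst P = 5" and h1: "fc (psnd P) (cons_c v X) 0 \<in> S"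
        and h2: "\<forall>y<v. \<exists>r. r \<noteq> 0 \<and> fc (psnd P) (cons_c y X) r \<in> S"
      have p: "psnd P < P" using lt t by simp
      have a: "ev_c (psnd P) (cons_c v X) 0" by (rule IHP[OF p h1])
      have b: "\<forall>y<v. \<exists>r. r \<noteq> 0 \<and> ev_c (psnd P) (cons_c y X) r"
      proof (intro allI impI)
        fix y assume "y < v"
        then obtain r where "r \<noteq> 0" "fc (psnd P) (cons_c y X) r \<in> S" using h2 by blast
        then show "\<exists>r. r \<noteq> 0 \<and> ev_c (psnd P) (cons_c y X) r" using IHP[OF p] by blast
      qed
      show ?thesis by (rule e5[OF t a b])
    qed
  qed
qed


lemma closedS_empty: "closedS {}" unfolding closedS_def by simp

lemma ins: "finite S \<Longrightarrow> closedS S \<Longrightarrow> justS S P X v \<Longrightarrow> \<exists>S'. finite S' \<and> closedS S' \<and> fc P X v \<in> S'"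
  by (intro exI[of _ "insert (fc P X v) S"]) (auto intro: closedS_insert)

lemma closedS_Un: "closedS A \<Longrightarrow> closedS B \<Longrightarrow> closedS (A \<union> B)"
  using closedS_Union[of "{A,B}"] by simp

lemma closedS_UN: "\<forall>j<m. closedS (SS j) \<Longrightarrow> closedS (\<Union>j<m. SS j)"
  using closedS_Union[of "SS ` {..<m}"] by auto

lemma justS3: "pfst P = 3 \<Longrightarrow> fc (pfst (psnd P)) Y v \<in> S \<Longrightarrow> len_c Y = len_c (psnd (psnd P))
   \<Longrightarrow> (\<And>j. j<len_c (psnd (psnd P)) \<Longrightarrow> fc (nth_c (psnd (psnd P)) j) X (nth_c Y j) \<in> S) \<Longrightarrow> justS S P X v"
  unfolding justS_def by (rule disjI2, rule disjI2, rule disjI2, rule disjI1) blast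
lemma justS4a: "pfst P = 4 \<Longrightarrow> X \<noteq> 0 \<Longrightarrow> hd_c X = 0 \<Longrightarrow> fc (pfst (psnd P)) (tl_c X) v \<in> S \<Longrightarrow> justS S P X v"
  unfolding justS_def by (rule disjI2, rule disjI2, rule disjI2, rule disjI2, rule disjI1) blast
lemma justS4b: "pfst P = 4 \<Longrightarrow> X \<noteq> 0 \<Longrightarrow> hd_c X = Suc m \<Longrightarrow> fc P (cons_c m (tl_c X)) r \<in> S
   \<Longrightarrow> fc (psnd (psnd P)) (cons_c m (cons_c r (tl_c X))) v \<in> S \<Longrightarrow> justS S P X v"
  unfolding justS_def by (rule disjI2, rule disjI2, rule disjI2, rule disjI2, rule disjI2, rule disjI1) auto
lemma justS5: "pfst P = 5 \<Longrightarrow> fc (psnd P) (cons_c v X) 0 \<in> S \<Longrightarrow> (\<And>y. y<v \<Longrightarrow> \<exists>r. r \<noteq> 0 \<and> fc (psnd P) (cons_c y X) r \<in> S)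
   \<Longrightarrow> justS S P X v"
  unfolding justS_def by (rule disjI2, rule disjI2, rule disjI2, rule disjI2, rule disjI2, rule disjI2) blast

lemma complete: "ev_c P X v \<Longrightarrow> \<exists>S. finite S \<and> closedS S \<and> fc P X v \<in> S"
proof (induction rule: ev_c.induct)
  case (e0 P X)
  show ?case by (rule ins[OF _ closedS_empty]) (use e0 in \<open>auto simp: justS_def\<close>)
next
  case (e1 P X)
  show ?case by (rule ins[OF _ closedS_empty]) (use e1 in \<open>auto simp: justS_def\<close>)
next
  case (e2 P X)
  show ?case by (rule ins[OF _ closedS_empty]) (use e2 in \<open>auto simp: justS_def\<close>)
next
  case (e3 P Y v X)
  let ?m = "len_c (psnd (psnd P))"
  obtain S0 where S0: "finite S0" "closedS S0" "fc (pfst (psnd P)) Y v \<in> S0" using e3(4) by blast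
  have "\<forall>j. \<exists>S. j < ?m \<longrightarrow> finite S \<and> closedS S \<and> fc (nth_c (psnd (psnd P)) j) X (nth_c Y j) \<in> S"
    using e3(5) by blast
  then obtain SS where SS: "\<And>j. j < ?m \<Longrightarrow> finite (SS j) \<and> closedS (SS j) \<and> fc (nth_c (psnd (psnd P)) j) X (nth_c Y j) \<in> SS j"
    by metis
  let ?S = "S0 \<union> (\<Union>j<?m. SS j)"
  have "finite ?S" using S0 SS by auto
  moreover have "closedS ?S" using S0 SS by (intro closedS_Un closedS_UN) auto
  moreover have "justS ?S P X v"
  proof (rule justS3[OF e3(1)])
    show "fc (pfst (psnd P)) Y v \<in> ?S" using S0 by blast
    show "len_c Y = len_c (psnd (psnd P))" by (rule e3(3))
    fix j assume "j < ?m"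
    then show "fc (nth_c (psnd (psnd P)) j) X (nth_c Y j) \<in> ?S" using SS[of j] by blast
  qed
  ultimately show ?case by (rule ins)
next
  case (e4a P X v)
  obtain S0 where S0: "finite S0" "closedS S0" "fc (pfst (psnd P)) (tl_c X) v \<in> S0" using e4a by blast
  have "justS S0 P X v" by (rule justS4a[OF e4a(1-3) S0(3)])
  then show ?case using ins S0 by blast
next
  case (e4b P X m r v)
  obtain S1 where S1: "finite S1" "closedS S1" "fc P (cons_c m (tl_c X)) r \<in> S1" using e4b by blast
  obtain S2 where S2: "finite S2" "closedS S2" "fc (psnd (psnd P)) (cons_c m (cons_c r (tl_c X))) v \<in> S2" using e4b by blast
  have "justS (S1 \<union> S2) P X v" by (rule justS4b[OF e4b(1-3)]) (use S1 S2 in auto)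
  then show ?case using ins[of "S1 \<union> S2"] S1 S2 closedS_Un by blast
next
  case (e5 P v X)
  obtain S0 where S0: "finite S0" "closedS S0" "fc (psnd P) (cons_c v X) 0 \<in> S0" using e5(3) by blast
  have "\<forall>y. \<exists>rS. y < v \<longrightarrow> fst rS \<noteq> 0 \<and> finite (snd rS) \<and> closedS (snd rS) \<and> fc (psnd P) (cons_c y X) (fst rS) \<in> snd rS"
  proof
    fix y show "\<exists>rS. y < v \<longrightarrow> fst rS \<noteq> 0 \<and> finite (snd rS) \<and> closedS (snd rS) \<and> fc (psnd P) (cons_c y X) (fst rS) \<in> snd rS"
    proof (cases "y < v")
      case True
      then obtain r where "r \<noteq> 0" "\<exists>S. finite S \<and> closedS S \<and> fc (psnd P) (cons_c y X) r \<in> S" using e5(4) \<open>y < v\<close> by blast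
      then obtain S where "r \<noteq> 0" "finite S" "closedS S" "fc (psnd P) (cons_c y X) r \<in> S" by blast
      then show ?thesis by (intro exI[of _ "(r,S)"]) simp
    qed simp
  qed
  then obtain RS where RS: "\<And>y. y < v \<Longrightarrow> fst (RS y) \<noteq> 0 \<and> finite (snd (RS y)) \<and> closedS (snd (RS y)) \<and> fc (psnd P) (cons_c y X) (fst (RS y)) \<in> snd (RS y)"
    by metis
  let ?S = "S0 \<union> (\<Union>y<v. snd (RS y))"
  have "finite ?S" using S0 RS by auto
  moreover have "closedS ?S" using S0 RS by (intro closedS_Un closedS_UN) auto
  moreover have "justS ?S P X v"
  proof (rule justS5[OF e5(1)])
    show "fc (psnd P) (cons_c v X) 0 \<in> ?S" using S0 by blast
    fix y assume "y < v"
    then show "\<exists>r. r \<noteq> 0 \<and> fc (psnd P) (cons_c y X) r \<in> ?S" using RS[of y] by blast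
  qed
  ultimately show ?case by (rule ins)
qed


lemma lc_cons: "cons_c a (lc xs) = lc (a # xs)" by simp

lemma progs: "recfn k f \<Longrightarrow> \<exists>P. \<forall>xs. length xs = k \<longrightarrow> (\<forall>v. ev_c P (lc xs) v \<longleftrightarrow> f xs = v)"
proof (induction rule: recfn.induct)
  case (rf_zero k)
  show ?case by (intro exI[of _ "prod_encode (0,0)"]) (auto simp: inv0)
next
  case rf_succ
  show ?case
  proof (intro exI[of _ "prod_encode (1,0)"] allI impI)
    fix xs :: "nat list" and v assume "length xs = 1"
    then have "xs \<noteq> []" by auto
    then show "ev_c (prod_encode (1, 0)) (lc xs) v = (Suc (hd xs) = v)" by (auto simp: inv1)
  qed
next
  case (rf_proj i k)
  show ?case
    by (intro exI[of _ "prod_encode (2,i)"] allI impI) (use rf_proj in \<open>auto simp: inv2\<close>)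
next
  case (rf_comp m f k gs)
  obtain Pf where Pf: "\<And>ys v. length ys = m \<Longrightarrow> ev_c Pf (lc ys) v \<longleftrightarrow> f ys = v" using rf_comp(2) by blast
  have "\<forall>i. \<exists>P. i < m \<longrightarrow> (\<forall>xs. length xs = k \<longrightarrow> (\<forall>v. ev_c P (lc xs) v \<longleftrightarrow> gs i xs = v))"
    using rf_comp(3) by blast
  then obtain Pg where Pg: "\<And>i xs v. i < m \<Longrightarrow> length xs = k \<Longrightarrow> ev_c (Pg i) (lc xs) v \<longleftrightarrow> gs i xs = v"
    by metis
  let ?G = "lc (map Pg [0..<m])"
  let ?P = "prod_encode (3, prod_encode (Pf, ?G))"
  show ?case
  proof (intro exI[of _ ?P] allI impI)
    fix xs :: "nat list" and v assume xs: "length xs = k"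
    have G: "len_c ?G = m" "\<And>j. j < m \<Longrightarrow> nth_c ?G j = Pg j" by simp_all
    show "ev_c ?P (lc xs) v \<longleftrightarrow> f (map (\<lambda>i. gs i xs) [0..<m]) = v"
    proof
      assume "ev_c ?P (lc xs) v"
      then obtain Y where Y: "ev_c Pf Y v" "len_c Y = m" "\<forall>j<m. ev_c (Pg j) (lc xs) (nth_c Y j)"
        by (auto simp: inv3 G)
      obtain ys where ys: "Y = lc ys" using lc_surj by blast
      have l: "length ys = m" using Y(2) ys by simp
      have "ys = map (\<lambda>i. gs i xs) [0..<m]"
      proof (rule nth_equalityI)
        show "length ys = length (map (\<lambda>i. gs i xs) [0..<m])" using l by simp
        fix j assume "j < length ys"
        then have "j < m" using l by simp
        then have "ev_c (Pg j) (lc xs) (ys ! j)" using Y(3) ys l by auto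
        then show "ys ! j = map (\<lambda>i. gs i xs) [0..<m] ! j" using Pg[OF \<open>j < m\<close> xs] \<open>j < m\<close> by simp
      qed
      then show "f (map (\<lambda>i. gs i xs) [0..<m]) = v" using Pf[OF l] Y(1) ys by simp
    next
      assume h: "f (map (\<lambda>i. gs i xs) [0..<m]) = v"
      let ?Y = "lc (map (\<lambda>i. gs i xs) [0..<m])"
      have "ev_c Pf ?Y v" using Pf h by simp
      moreover have "len_c ?Y = m" by simp
      moreover have "\<forall>j<m. ev_c (Pg j) (lc xs) (nth_c ?Y j)" using Pg xs by simp
      ultimately show "ev_c ?P (lc xs) v" unfolding inv3[of ?P, simplified] G by auto
    qed
  qed
next
  case (rf_prim k f g)
  obtain Pf where Pf: "\<And>ys v. length ys = k \<Longrightarrow> ev_c Pf (lc ys) v \<longleftrightarrow> f ys = v" using rf_prim.IH(1) by blast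
  obtain Pg where Pg: "\<And>ys v. length ys = k + 2 \<Longrightarrow> ev_c Pg (lc ys) v \<longleftrightarrow> g ys = v" using rf_prim.IH(2) by blast
  let ?P = "prod_encode (4, prod_encode (Pf, Pg))"
  have key: "\<And>(T::nat list) a v. length T = k \<Longrightarrow> ev_c ?P (lc (a # T)) v \<longleftrightarrow> rec_nat (f T) (\<lambda>y r. g (y # r # T)) a = v"
  proof -
    fix T :: "nat list" and a :: nat assume T: "length T = k"
    show "\<And>v. ev_c ?P (lc (a # T)) v \<longleftrightarrow> rec_nat (f T) (\<lambda>y r. g (y # r # T)) a = v"
    proof (induction a)
      case 0
      have "ev_c ?P (lc (0 # T)) v \<longleftrightarrow> ev_c Pf (lc T) v" by (subst inv4) auto
      then show ?case using Pf[OF T] by simp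
    next
      case (Suc m)
      have "ev_c ?P (lc (Suc m # T)) v \<longleftrightarrow> (\<exists>r. ev_c ?P (lc (m # T)) r \<and> ev_c Pg (lc (m # r # T)) v)"
        by (subst inv4) auto
      also have "\<dots> \<longleftrightarrow> (\<exists>r. rec_nat (f T) (\<lambda>y r. g (y # r # T)) m = r \<and> g (m # r # T) = v)"
      proof -
        have Pg': "\<And>r v. ev_c Pg (cons_c m (cons_c r (lc T))) v \<longleftrightarrow> g (m#r#T) = v"
          using Pg[of "m # _ # T"] T by simp
        show ?thesis using Suc.IH Pg' by simp
      qed
      finally show ?case by simp
    qed
  qed
  show ?case
  proof (intro exI[of _ ?P] allI impI)
    fix xs :: "nat list" and v assume "length xs = k + 1"
    then obtain a T where "xs = a # T" "length T = k" by (cases xs) auto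
    then show "ev_c ?P (lc xs) v \<longleftrightarrow> rec_nat (f (tl xs)) (\<lambda>y r. g (y # r # tl xs)) (hd xs) = v"
      using key by simp
  qed
next
  case (rf_mu k f)
  obtain Pf where Pf: "\<And>ys v. length ys = k + 1 \<Longrightarrow> ev_c Pf (lc ys) v \<longleftrightarrow> f ys = v" using rf_mu.IH by blast
  let ?P = "prod_encode (5, Pf)"
  show ?case
  proof (intro exI[of _ ?P] allI impI)
    fix xs :: "nat list" and v assume xs: "length xs = k"
    have "ev_c ?P (lc xs) v \<longleftrightarrow> f (v # xs) = 0 \<and> (\<forall>y<v. f (y # xs) \<noteq> 0)"
    proof -
      have Pf': "\<And>y v. ev_c Pf (cons_c y (lc xs)) v \<longleftrightarrow> f (y#xs) = v" using Pf[of "_ # xs"] xs by simp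
      show ?thesis by (simp add: inv5 Pf')
    qed
    also have "\<dots> \<longleftrightarrow> (LEAST y. f (y # xs) = 0) = v"
    proof
      assume "f (v # xs) = 0 \<and> (\<forall>y<v. f (y # xs) \<noteq> 0)"
      then show "(LEAST y. f (y # xs) = 0) = v" by (intro Least_equality) (auto simp: not_less[symmetric])
    next
      assume h: "(LEAST y. f (y # xs) = 0) = v"
      obtain y0 where "f (y0 # xs) = 0" using rf_mu.hyps(2) xs by blast
      then have "f ((LEAST y. f (y # xs) = 0) # xs) = 0" by (rule LeastI)
      moreover have "\<forall>y<(LEAST y. f (y # xs) = 0). f (y # xs) \<noteq> 0" using not_less_Least by blast
      ultimately show "f (v # xs) = 0 \<and> (\<forall>y<v. f (y # xs) \<noteq> 0)" using h by simp
    qed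
    finally show "ev_c ?P (lc xs) v \<longleftrightarrow> (LEAST y. f (y # xs) = 0) = v" .
  qed
next
  case (rf_ext k f g)
  then show ?case by metis
qed


definition justC :: "nat \<Rightarrow> nat \<Rightarrow> nat \<Rightarrow> nat \<Rightarrow> bool" where
  "justC L P X v \<longleftrightarrow>
     (pfst P = 0 \<and> v = 0) \<or> (pfst P = 1 \<and> v = Suc (hd_c X)) \<or> (pfst P = 2 \<and> v = nth_c X (psnd P))
   \<or> (pfst P = 3 \<and> (\<exists>Y\<le>L. mem_c (fc (pfst (psnd P)) Y v) L \<and> len_c Y = len_c (psnd (psnd P))
        \<and> (\<forall>j<len_c (psnd (psnd P)). mem_c (fc (nth_c (psnd (psnd P)) j) X (nth_c Y j)) L)))
   \<or> (pfst P = 4 \<and> X \<noteq> 0 \<and> hd_c X = 0 \<and> mem_c (fc (pfst (psnd P)) (tl_c X) v) L)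
   \<or> (pfst P = 4 \<and> X \<noteq> 0 \<and> hd_c X \<noteq> 0 \<and> (\<exists>r\<le>L. mem_c (fc P (cons_c (hd_c X - 1) (tl_c X)) r) L
        \<and> mem_c (fc (psnd (psnd P)) (cons_c (hd_c X - 1) (cons_c r (tl_c X))) v) L))
   \<or> (pfst P = 5 \<and> mem_c (fc (psnd P) (cons_c v X) 0) L \<and> (\<forall>y<v. \<exists>r\<le>L. r \<noteq> 0 \<and> mem_c (fc (psnd P) (cons_c y X) r) L))"

definition chk :: "nat \<Rightarrow> bool" where
  "chk L \<longleftrightarrow> (\<forall>i<len_c L. justC L (pfst (nth_c L i)) (pfst (psnd (nth_c L i))) (psnd (psnd (nth_c L i))))"

lemma fc_bound: "fc a Y b \<in> set fs \<Longrightarrow> Y \<le> lc fs \<and> b \<le> lc fs"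
proof -
  assume "fc a Y b \<in> set fs"
  then have "fc a Y b < lc fs" by (rule elem_lt)
  moreover have "Y \<le> fc a Y b" "b \<le> fc a Y b"
    unfolding fc_def using pe_ge1[of Y b] pe_ge2[of b Y] pe_ge2[of "prod_encode (Y,b)" a] by linarith+
  ultimately show ?thesis by linarith
qed

lemma bex_bound: "(\<And>Y. A Y \<Longrightarrow> Y \<le> L) \<Longrightarrow> (\<exists>Y\<le>L. A Y) \<longleftrightarrow> (\<exists>Y. A Y)" by blast

lemma justC_lc: "justC (lc fs) P X v \<longleftrightarrow> justS (set fs) P X v"
proof -
  have b1: "(\<exists>Y\<le>lc fs. fc (pfst (psnd P)) Y v \<in> set fs \<and> len_c Y = len_c (psnd (psnd P))
        \<and> (\<forall>j<len_c (psnd (psnd P)). fc (nth_c (psnd (psnd P)) j) X (nth_c Y j) \<in> set fs))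
     \<longleftrightarrow> (\<exists>Y. fc (pfst (psnd P)) Y v \<in> set fs \<and> len_c Y = len_c (psnd (psnd P))
        \<and> (\<forall>j<len_c (psnd (psnd P)). fc (nth_c (psnd (psnd P)) j) X (nth_c Y j) \<in> set fs))"
    by (rule bex_bound) (use fc_bound in blast)
  have b2: "(\<exists>r\<le>lc fs. fc P (cons_c (hd_c X - 1) (tl_c X)) r \<in> set fs
        \<and> fc (psnd (psnd P)) (cons_c (hd_c X - 1) (cons_c r (tl_c X))) v \<in> set fs)
     \<longleftrightarrow> (\<exists>r. fc P (cons_c (hd_c X - 1) (tl_c X)) r \<in> set fs
        \<and> fc (psnd (psnd P)) (cons_c (hd_c X - 1) (cons_c r (tl_c X))) v \<in> set fs)"
    by (rule bex_bound) (use fc_bound in blast)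
  have b3: "\<And>y. (\<exists>r\<le>lc fs. r \<noteq> 0 \<and> fc (psnd P) (cons_c y X) r \<in> set fs)
     \<longleftrightarrow> (\<exists>r. r \<noteq> 0 \<and> fc (psnd P) (cons_c y X) r \<in> set fs)"
    by (rule bex_bound) (use fc_bound in blast)
  show ?thesis unfolding justC_def justS_def mem_lc b1 b2 b3 ..
qed

lemma chk_lc: "chk (lc fs) \<longleftrightarrow> closedS (set fs)"
  unfolding chk_def closedS_def justC_lc len_lc
proof
  assume "\<forall>i<length fs. justS (set fs) (pfst (nth_c (lc fs) i)) (pfst (psnd (nth_c (lc fs) i))) (psnd (psnd (nth_c (lc fs) i)))"
  then show "\<forall>q\<in>set fs. justS (set fs) (pfst q) (pfst (psnd q)) (psnd (psnd q))"
    by (auto simp: in_set_conv_nth)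
next
  assume a: "\<forall>q\<in>set fs. justS (set fs) (pfst q) (pfst (psnd q)) (psnd (psnd q))"
  show "\<forall>i<length fs. justS (set fs) (pfst (nth_c (lc fs) i)) (pfst (psnd (nth_c (lc fs) i))) (psnd (psnd (nth_c (lc fs) i)))"
  proof (intro allI impI)
    fix i assume "i < length fs"
    then show "justS (set fs) (pfst (nth_c (lc fs) i)) (pfst (psnd (nth_c (lc fs) i))) (psnd (psnd (nth_c (lc fs) i)))"
      using a nth_mem[of i fs] by simp
  qed
qed

lemma rc_fc: "rc f \<Longrightarrow> rc g \<Longrightarrow> rc h \<Longrightarrow> rc (\<lambda>x. fc (f x) (g x) (h x))"
  unfolding fc_def by (intro rc_pe)

lemma rcp_chk: "rcp chk"
proof -
  have "rcp (\<lambda>L. chk L)"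
    unfolding chk_def justC_def
    by (intro rc_intros rc_fc)
  then show ?thesis by simp
qed

lemma kleene: "recfn 1 f \<Longrightarrow> \<exists>P. \<forall>z v. f [z] = v \<longleftrightarrow> (\<exists>L. chk L \<and> mem_c (fc P (cons_c z 0) v) L)"
proof -
  assume "recfn 1 f"
  then obtain P where P: "\<And>xs v. length xs = 1 \<Longrightarrow> ev_c P (lc xs) v \<longleftrightarrow> f xs = v" using progs by blast
  show ?thesis
  proof (intro exI[of _ P] allI)
    fix z v
    have "f [z] = v \<longleftrightarrow> ev_c P (lc [z]) v" using P[of "[z]"] by simp
    also have "\<dots> \<longleftrightarrow> (\<exists>L. chk L \<and> mem_c (fc P (cons_c z 0) v) L)"
    proof
      assume "ev_c P (lc [z]) v"
      then obtain S where S: "finite S" "closedS S" "fc P (lc [z]) v \<in> S" using complete by blast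
      obtain fs where "set fs = S" using finite_list[OF S(1)] by blast
      then show "\<exists>L. chk L \<and> mem_c (fc P (cons_c z 0) v) L"
        using S by (intro exI[of _ "lc fs"]) (simp add: chk_lc)
    next
      assume "\<exists>L. chk L \<and> mem_c (fc P (cons_c z 0) v) L"
      then obtain L where L: "chk L" "mem_c (fc P (cons_c z 0) v) L" by blast
      obtain fs where fs: "L = lc fs" using lc_surj by blast
      have "closedS (set fs)" using L(1) fs chk_lc by simp
      moreover have "fc P (lc [z]) v \<in> set fs" using L(2) fs by simp
      ultimately show "ev_c P (lc [z]) v" by (rule sound)
    qed
    finally show "f [z] = v \<longleftrightarrow> (\<exists>L. chk L \<and> mem_c (fc P (cons_c z 0) v) L)" .
  qed
qed


lemma rcp_comp: "rcp P \<Longrightarrow> rc h \<Longrightarrow> rcp (\<lambda>x. P (h x))"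
  unfolding rcp_def using rc_comp by blast

lemma rcp_chk': "rc f \<Longrightarrow> rcp (\<lambda>x. chk (f x))"
  using rcp_comp[OF rcp_chk] .

lemma rc_of_recfn1: "recfn 1 f \<Longrightarrow> rc (\<lambda>x. f [x])"
  unfolding rc_def apply (rule rf_ext'[of 1 f]) apply assumption apply (erule len1E) by simp

lemma comp_iff: "computable_set A \<longleftrightarrow> rcp (\<lambda>x. x \<in> A)"
proof
  assume "computable_set A"
  then obtain f where f: "recfn 1 f" "\<And>x. x \<in> A \<longleftrightarrow> f [x] = 0" unfolding computable_set_def by blast
  have "rcp (\<lambda>x. f [x] = 0)" by (intro rcp_eq rc_of_recfn1[OF f(1)] rc_const)
  then show "rcp (\<lambda>x. x \<in> A)" using f(2) by simp
next
  assume "rcp (\<lambda>x. x \<in> A)"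
  then have "rcp (\<lambda>x. x \<notin> A)" by (rule rcp_not)
  then have r: "recfn 1 (\<lambda>xs. if hd xs \<notin> A then 1 else 0)" unfolding rcp_def rc_def .
  show "computable_set A" unfolding computable_set_def
    by (rule exI[of _ "\<lambda>xs. if hd xs \<notin> A then 1 else 0"]) (use r in simp)
qed

lemma S0_iff: "Sigma0 0 A \<longleftrightarrow> rcp (\<lambda>x. x \<in> A)" by (simp add: comp_iff)
declare Sigma0.simps(1)[simp del]

lemma SigI: "Sigma0 p (- B) \<Longrightarrow> A = {x. \<exists>y. prod_encode (x, y) \<in> B} \<Longrightarrow> Sigma0 (Suc p) A"
  unfolding Sigma0.simps by blast

lemma Sig_comp: "rcp (\<lambda>x. x \<in> A) \<Longrightarrow> Sigma0 p A"
proof (induction p arbitrary: A)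
  case 0 then show ?case by (simp add: S0_iff)
next
  case (Suc p)
  let ?B = "{z. pfst z \<in> A}"
  have "rcp (\<lambda>z. z \<in> - ?B)" using rcp_not[OF rcp_comp[OF Suc.prems rc_pfst[OF rc_id]]] by simp
  then have "Sigma0 p (- ?B)" by (rule Suc.IH)
  moreover have "A = {x. \<exists>y. prod_encode (x, y) \<in> ?B}" by simp
  ultimately show ?case by auto
qed

lemma Sig_pre: "Sigma0 p A \<Longrightarrow> rc h \<Longrightarrow> Sigma0 p {x. h x \<in> A}"
proof (induction p arbitrary: A h)
  case 0 then show ?case using rcp_comp[of "\<lambda>x. x \<in> A" h] by (simp add: S0_iff)
next
  case (Suc p)
  obtain B where B: "Sigma0 p (- B)" "A = {x. \<exists>y. prod_encode (x, y) \<in> B}" using Suc.prems(1) by auto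
  let ?k = "\<lambda>z. prod_encode (h (pfst z), psnd z)"
  have k: "rc ?k" by (intro rc_pe rc_comp[OF Suc.prems(2)] rc_pfst rc_psnd rc_id)
  have "Sigma0 p {z. ?k z \<in> - B}" by (rule Suc.IH[OF B(1) k])
  then have "Sigma0 p (- {z. ?k z \<in> B})" by (simp add: Compl_eq)
  moreover have "{x. h x \<in> A} = {x. \<exists>y. prod_encode (x, y) \<in> {z. ?k z \<in> B}}" using B(2) by simp
  ultimately show ?case by (simp only: Sigma0.simps) blast
qed

lemma Sig_UnInt: "Sigma0 p A \<Longrightarrow> Sigma0 p B \<Longrightarrow> Sigma0 p (A \<union> B) \<and> Sigma0 p (A \<inter> B)"
proof (induction p arbitrary: A B)
  case 0
  then have a: "rcp (\<lambda>x. x \<in> A)" "rcp (\<lambda>x. x \<in> B)" by (simp_all add: S0_iff)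
  show ?case unfolding S0_iff using rcp_or[OF a] rcp_and[OF a] by simp
next
  case (Suc p)
  obtain BA where BA: "Sigma0 p (- BA)" "A = {x. \<exists>y. prod_encode (x, y) \<in> BA}" using Suc.prems(1) by auto
  obtain BB where BB: "Sigma0 p (- BB)" "B = {x. \<exists>y. prod_encode (x, y) \<in> BB}" using Suc.prems(2) by auto
  let ?k1 = "\<lambda>z. prod_encode (pfst z, psnd (psnd z))"
  have k1: "rc ?k1" by (intro rc_intros)
  let ?k2 = "\<lambda>z. prod_encode (pfst z, pfst (psnd z))"
  have k2: "rc ?k2" by (intro rc_intros)
  let ?Z = "{z. pfst (psnd z) = 0}"
  have Z: "Sigma0 p ?Z" "Sigma0 p (- ?Z)"
    by (rule Sig_comp, simp, intro rc_intros)+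
  have p1: "Sigma0 p {z. ?k1 z \<in> - BA}" "Sigma0 p {z. ?k1 z \<in> - BB}" "Sigma0 p {z. ?k2 z \<in> - BA}"
    by (rule Sig_pre[OF BA(1) k1], rule Sig_pre[OF BB(1) k1], rule Sig_pre[OF BA(1) k2])
  let ?CU = "{z. (pfst (psnd z) = 0 \<and> ?k1 z \<in> BA) \<or> (pfst (psnd z) \<noteq> 0 \<and> ?k1 z \<in> BB)}"
  have "- ?CU = (?Z \<inter> {z. ?k1 z \<in> - BA}) \<union> (- ?Z \<inter> {z. ?k1 z \<in> - BB})" by auto
  moreover have "Sigma0 p ((?Z \<inter> {z. ?k1 z \<in> - BA}) \<union> (- ?Z \<inter> {z. ?k1 z \<in> - BB}))"
    using Suc.IH Z p1 by meson
  ultimately have cu: "Sigma0 p (- ?CU)" by simp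
  have "A \<union> B = {x. \<exists>w. prod_encode (x, w) \<in> ?CU}"
  proof (rule set_eqI, rule iffI)
    fix x assume "x \<in> A \<union> B"
    then show "x \<in> {x. \<exists>w. prod_encode (x, w) \<in> ?CU}"
    proof
      assume "x \<in> A" then obtain y where "prod_encode (x,y) \<in> BA" using BA by auto
      then show ?thesis by (intro CollectI exI[of _ "prod_encode (0, y)"]) simp
    next
      assume "x \<in> B" then obtain y where "prod_encode (x,y) \<in> BB" using BB by auto
      then show ?thesis by (intro CollectI exI[of _ "prod_encode (1, y)"]) simp
    qed
  next
    fix x assume "x \<in> {x. \<exists>w. prod_encode (x, w) \<in> ?CU}"
    then obtain w where "prod_encode (x, w) \<in> ?CU" by blast
    then show "x \<in> A \<union> B" using BA(2) BB(2) by auto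
  qed
  then have U: "Sigma0 (Suc p) (A \<union> B)" by (rule SigI[OF cu])
  let ?CI = "{z. ?k2 z \<in> BA \<and> ?k1 z \<in> BB}"
  have "- ?CI = {z. ?k2 z \<in> - BA} \<union> {z. ?k1 z \<in> - BB}" by auto
  moreover have "Sigma0 p ({z. ?k2 z \<in> - BA} \<union> {z. ?k1 z \<in> - BB})" using Suc.IH p1 by meson
  ultimately have ci: "Sigma0 p (- ?CI)" by simp
  have "A \<inter> B = {x. \<exists>w. prod_encode (x, w) \<in> ?CI}"
  proof (rule set_eqI, rule iffI)
    fix x assume "x \<in> A \<inter> B"
    then obtain y1 y2 where "prod_encode (x,y1) \<in> BA" "prod_encode (x,y2) \<in> BB" using BA BB by auto
    then show "x \<in> {x. \<exists>w. prod_encode (x, w) \<in> ?CI}" by (intro CollectI exI[of _ "prod_encode (y1, y2)"]) simp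
  next
    fix x assume "x \<in> {x. \<exists>w. prod_encode (x, w) \<in> ?CI}"
    then obtain w where "prod_encode (x, w) \<in> ?CI" by blast
    then show "x \<in> A \<inter> B" using BA(2) BB(2) by auto
  qed
  then have I: "Sigma0 (Suc p) (A \<inter> B)" by (rule SigI[OF ci])
  show ?case using U I ..
qed

lemma Sig_Un: "Sigma0 p A \<Longrightarrow> Sigma0 p B \<Longrightarrow> Sigma0 p (A \<union> B)" using Sig_UnInt by blast
lemma Sig_Int: "Sigma0 p A \<Longrightarrow> Sigma0 p B \<Longrightarrow> Sigma0 p (A \<inter> B)" using Sig_UnInt by blast

lemma Sig_proj: "Sigma0 (Suc p) A \<Longrightarrow> Sigma0 (Suc p) {x. \<exists>y. prod_encode (x, y) \<in> A}"
proof -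
  assume "Sigma0 (Suc p) A"
  then obtain B where B: "Sigma0 p (- B)" "A = {x. \<exists>y. prod_encode (x, y) \<in> B}" by auto
  let ?k = "\<lambda>z. prod_encode (prod_encode (pfst z, pfst (psnd z)), psnd (psnd z))"
  have "Sigma0 p {z. ?k z \<in> - B}" by (rule Sig_pre[OF B(1)]) (intro rc_intros)
  then have "Sigma0 p (- {z. ?k z \<in> B})" by (simp add: Compl_eq)
  moreover have "{x. \<exists>y. prod_encode (x, y) \<in> A} = {x. \<exists>w. prod_encode (x, w) \<in> {z. ?k z \<in> B}}"
  proof (rule set_eqI, rule iffI)
    fix x assume "x \<in> {x. \<exists>y. prod_encode (x, y) \<in> A}"
    then obtain y u where "prod_encode (prod_encode (x, y), u) \<in> B" using B(2) by auto
    then show "x \<in> {x. \<exists>w. prod_encode (x, w) \<in> {z. ?k z \<in> B}}"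
      by (intro CollectI exI[of _ "prod_encode (y, u)"]) simp
  next
    fix x assume "x \<in> {x. \<exists>w. prod_encode (x, w) \<in> {z. ?k z \<in> B}}"
    then show "x \<in> {x. \<exists>y. prod_encode (x, y) \<in> A}" using B(2) by auto
  qed
  ultimately show ?thesis by (simp only: Sigma0.simps) blast
qed

lemma Pi_Sig_Suc: "Pi0 p A \<Longrightarrow> Sigma0 (Suc p) A"
proof -
  assume "Pi0 p A"
  then have a: "Sigma0 p (- A)" by (simp add: Pi0_def)
  have "Sigma0 p {z. pfst z \<in> - A}" by (rule Sig_pre[OF a rc_pfst[OF rc_id]])
  then have "Sigma0 p (- {z. pfst z \<in> A})" by (simp add: Compl_eq)
  moreover have "A = {x. \<exists>y. prod_encode (x, y) \<in> {z. pfst z \<in> A}}" by simp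
  ultimately show ?thesis by (simp only: Sigma0.simps) blast
qed

lemma Sig_Suc: "Sigma0 p A \<Longrightarrow> Sigma0 (Suc p) A"
proof (induction p arbitrary: A)
  case 0
  then have "rcp (\<lambda>x. x \<in> - A)" using rcp_not by (simp add: S0_iff)
  then have "Pi0 0 A" by (simp add: Pi0_def S0_iff)
  then show ?case by (rule Pi_Sig_Suc)
next
  case (Suc p)
  obtain B where B: "Sigma0 p (- B)" "A = {x. \<exists>y. prod_encode (x, y) \<in> B}" using Suc.prems by auto
  have "Sigma0 (Suc p) (- B)" by (rule Suc.IH[OF B(1)])
  then show ?case using B(2) by (simp only: Sigma0.simps) blast
qed

lemma Sig_mono: "Sigma0 1 A \<Longrightarrow> 1 \<le> p \<Longrightarrow> Sigma0 p A"
proof (induction p)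
  case 0 then show ?case by simp
next
  case (Suc p)
  show ?case
  proof (cases "p = 0")
    case True then show ?thesis using Suc.prems by simp
  next
    case False then have "Sigma0 p A" using Suc by simp
    then show ?thesis by (rule Sig_Suc)
  qed
qed

lemma Pi_comp: "rcp (\<lambda>x. x \<in> A) \<Longrightarrow> Pi0 p A"
proof -
  assume "rcp (\<lambda>x. x \<in> A)"
  then have "rcp (\<lambda>x. x \<in> - A)" using rcp_not by simp
  then show ?thesis unfolding Pi0_def by (rule Sig_comp)
qed
lemma Pi_pre: "Pi0 p A \<Longrightarrow> rc h \<Longrightarrow> Pi0 p {x. h x \<in> A}"
  unfolding Pi0_def using Sig_pre[of p "- A" h] by (simp add: Compl_eq)
lemma Pi_Un: "Pi0 p A \<Longrightarrow> Pi0 p B \<Longrightarrow> Pi0 p (A \<union> B)"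
  unfolding Pi0_def using Sig_Int by auto
lemma Pi_Int: "Pi0 p A \<Longrightarrow> Pi0 p B \<Longrightarrow> Pi0 p (A \<inter> B)"
  unfolding Pi0_def using Sig_Un by auto


definition T1 :: "nat \<Rightarrow> nat \<Rightarrow> nat \<Rightarrow> bool" where
  "T1 P x w \<longleftrightarrow> chk (psnd (psnd w)) \<and> pfst (psnd w) \<noteq> 0 \<and>
     mem_c (fc P (cons_c (prod_encode (x, pfst w)) 0) (pfst (psnd w))) (psnd (psnd w))"

definition U1 :: "nat set" where "U1 = {u. \<exists>w. T1 (pfst u) (psnd u) w}"

fun Uu :: "nat \<Rightarrow> nat set" where
  "Uu 0 = U1"
| "Uu (Suc p) = {u. \<exists>y. prod_encode (pfst u, prod_encode (psnd u, y)) \<notin> Uu p}"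

lemma U1_sig: "Sigma0 1 U1"
proof -
  let ?B = "{z. T1 (pfst (pfst z)) (psnd (pfst z)) (psnd z)}"
  have "rcp (\<lambda>z. \<not> T1 (pfst (pfst z)) (psnd (pfst z)) (psnd z))"
    unfolding T1_def by (intro rc_intros rcp_chk' rc_fc)
  then have "Sigma0 0 (- ?B)" by (simp add: S0_iff)
  moreover have "U1 = {x. \<exists>y. prod_encode (x, y) \<in> ?B}" by (simp add: U1_def)
  ultimately have "Sigma0 (Suc 0) U1" by (rule SigI)
  then show ?thesis by simp
qed

lemma U1_univ: "Sigma0 1 A \<Longrightarrow> \<exists>e. \<forall>x. x \<in> A \<longleftrightarrow> prod_encode (e, x) \<in> U1"
proof -
  assume "Sigma0 1 A"
  then obtain B where B: "Sigma0 0 (- B)" "A = {x. \<exists>y. prod_encode (x, y) \<in> B}"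
    by (auto simp: One_nat_def)
  then obtain f where f: "recfn 1 f" "\<And>z. z \<in> - B \<longleftrightarrow> f [z] = 0"
    unfolding S0_iff comp_iff[symmetric] computable_set_def by blast
  obtain P where P: "\<And>z v. f [z] = v \<longleftrightarrow> (\<exists>L. chk L \<and> mem_c (fc P (cons_c z 0) v) L)"
    using kleene[OF f(1)] by blast
  show ?thesis
  proof (intro exI[of _ P] allI)
    fix x
    have "x \<in> A \<longleftrightarrow> (\<exists>y. f [prod_encode (x, y)] \<noteq> 0)" using B(2) f(2) by auto
    also have "\<dots> \<longleftrightarrow> (\<exists>y v. v \<noteq> 0 \<and> f [prod_encode (x, y)] = v)" by auto
    also have "\<dots> \<longleftrightarrow> (\<exists>y v L. v \<noteq> 0 \<and> chk L \<and> mem_c (fc P (cons_c (prod_encode (x, y)) 0) v) L)"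
      unfolding P by blast
    also have "\<dots> \<longleftrightarrow> (\<exists>w. T1 P x w)"
    proof
      assume "\<exists>y v L. v \<noteq> 0 \<and> chk L \<and> mem_c (fc P (cons_c (prod_encode (x, y)) 0) v) L"
      then obtain y v L where "v \<noteq> 0 \<and> chk L \<and> mem_c (fc P (cons_c (prod_encode (x, y)) 0) v) L" by blast
      then show "\<exists>w. T1 P x w" unfolding T1_def by (intro exI[of _ "prod_encode (y, prod_encode (v, L))"]) simp
    next
      assume "\<exists>w. T1 P x w"
      then show "\<exists>y v L. v \<noteq> 0 \<and> chk L \<and> mem_c (fc P (cons_c (prod_encode (x, y)) 0) v) L"
        unfolding T1_def by blast
    qed
    also have "\<dots> \<longleftrightarrow> prod_encode (P, x) \<in> U1" by (simp add: U1_def)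
    finally show "x \<in> A \<longleftrightarrow> prod_encode (P, x) \<in> U1" .
  qed
qed

lemma Uu_props: "Sigma0 (Suc p) (Uu p) \<and> (\<forall>A. Sigma0 (Suc p) A \<longrightarrow> (\<exists>e. \<forall>x. x \<in> A \<longleftrightarrow> prod_encode (e, x) \<in> Uu p))"
proof (induction p)
  case 0
  show ?case using U1_sig U1_univ by simp
next
  case (Suc p)
  let ?k = "\<lambda>z. prod_encode (pfst (pfst z), prod_encode (psnd (pfst z), psnd z))"
  have "Sigma0 (Suc p) {z. ?k z \<in> Uu p}" by (rule Sig_pre[OF conjunct1[OF Suc.IH]]) (intro rc_intros)
  moreover have "{z. ?k z \<in> Uu p} = - {z. ?k z \<notin> Uu p}" by auto
  ultimately have "Sigma0 (Suc p) (- {z. ?k z \<notin> Uu p})" by simp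
  moreover have "Uu (Suc p) = {x. \<exists>y. prod_encode (x, y) \<in> {z. ?k z \<notin> Uu p}}" by simp
  ultimately have s: "Sigma0 (Suc (Suc p)) (Uu (Suc p))" by (rule SigI)
  have u: "\<exists>e. \<forall>x. x \<in> A \<longleftrightarrow> prod_encode (e, x) \<in> Uu (Suc p)" if A: "Sigma0 (Suc (Suc p)) A" for A
  proof -
    obtain B where B: "Sigma0 (Suc p) (- B)" "A = {x. \<exists>y. prod_encode (x, y) \<in> B}" using A by auto
    obtain e where e: "\<And>z. z \<in> - B \<longleftrightarrow> prod_encode (e, z) \<in> Uu p" using Suc.IH B(1) by blast
    show ?thesis
    proof (intro exI[of _ e] allI)
      fix x
      have "x \<in> A \<longleftrightarrow> (\<exists>y. prod_encode (e, prod_encode (x, y)) \<notin> Uu p)" using B(2) e by auto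
      then show "x \<in> A \<longleftrightarrow> prod_encode (e, x) \<in> Uu (Suc p)" by simp
    qed
  qed
  show ?case using s u by blast
qed


primrec tup :: "nat list \<Rightarrow> nat" where
  "tup [] = 0" | "tup (x # xs) = prod_encode (x, tup xs)"

definition pi :: "nat \<Rightarrow> nat \<Rightarrow> nat" where "pi i d = pfst ((psnd ^^ i) d)"

lemma pi_tup: "i < length xs \<Longrightarrow> pi i (tup xs) = xs ! i"
proof (induction xs arbitrary: i)
  case Nil then show ?case by simp
next
  case (Cons a xs)
  then show ?case by (cases i) (auto simp: pi_def funpow_Suc_right simp del: funpow.simps)
qed

lemma rc_pi: "rc f \<Longrightarrow> rc g \<Longrightarrow> rc (\<lambda>x. pi (f x) (g x))"
  unfolding pi_def by (intro rc_pfst rc_funpow[where st="\<lambda>_. psnd"] rc_psnd rc_id)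

lemma recfn_tup_drop: "j \<le> k \<Longrightarrow> recfn k (\<lambda>xs. tup (drop j xs))"
proof (induction "k - j" arbitrary: j)
  case 0
  then have "j = k" by simp
  show ?case by (rule rf_ext'[OF rf_const[of k 0]]) (simp add: \<open>j = k\<close>)
next
  case (Suc d)
  then have j: "j < k" "d = k - Suc j" by auto
  have IH: "recfn k (\<lambda>xs. tup (drop (Suc j) xs))" using Suc j by simp
  have "recfn k (\<lambda>xs. prod_encode (xs ! j, tup (drop (Suc j) xs)))"
    by (rule recfn_rc2[OF rc2_pe rf_proj[OF j(1)] IH])
  then show ?case
    by (rule rf_ext') (simp add: Cons_nth_drop_Suc[symmetric] j(1))
qed

lemma recfn_tup: "recfn k tup"
proof -
  have "recfn k (\<lambda>xs. tup (drop 0 xs))" by (rule recfn_tup_drop) simp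
  then show ?thesis by simp
qed

lemma image_pe: "prod_encode ` R = {z. (pfst z, psnd z) \<in> R}"
proof (rule set_eqI, rule iffI)
  fix z assume "z \<in> prod_encode ` R"
  then show "z \<in> {z. (pfst z, psnd z) \<in> R}" by auto
next
  fix z assume "z \<in> {z. (pfst z, psnd z) \<in> R}"
  then have "prod_encode (pfst z, psnd z) \<in> prod_encode ` R" by blast
  then show "z \<in> prod_encode ` R" by simp
qed

lemma rtrancl_bound:
  assumes R: "R \<subseteq> {0..<n} \<times> {0..<n}"
  shows "(a, b) \<in> R\<^sup>* \<longleftrightarrow> (\<exists>k<Suc (n * n). (a, b) \<in> R ^^ k)"
proof
  have fin: "finite R" using R finite_subset by blast
  have c: "card R \<le> n * n" using card_mono[OF _ R] by simp
  assume "(a, b) \<in> R\<^sup>*"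
  then obtain k where "k \<le> card R" "(a, b) \<in> R ^^ k" using rtrancl_finite_eq_relpow[OF fin] by auto
  then show "\<exists>k<Suc (n * n). (a, b) \<in> R ^^ k" using c by (intro exI[of _ k]) auto
next
  assume "\<exists>k<Suc (n * n). (a, b) \<in> R ^^ k"
  then show "(a, b) \<in> R\<^sup>*" using relpow_imp_rtrancl by blast
qed

locale cls =
  fixes K :: "nat set \<Rightarrow> bool" and W :: "nat set"
  assumes Kpre: "K A \<Longrightarrow> rc h \<Longrightarrow> K {x. h x \<in> A}"
    and KUn: "K A \<Longrightarrow> K B \<Longrightarrow> K (A \<union> B)"
    and KInt: "K A \<Longrightarrow> K B \<Longrightarrow> K (A \<inter> B)"
    and Kcomp: "rcp (\<lambda>x. x \<in> A) \<Longrightarrow> K A"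
    and KW: "K W"
    and Kuniv: "K A \<Longrightarrow> \<exists>e. \<forall>x. x \<in> A \<longleftrightarrow> prod_encode (e, x) \<in> W"
begin

lemma K_UN: "(\<And>m. m < (N::nat) \<Longrightarrow> K (A m)) \<Longrightarrow> K (\<Union>m<N. A m)"
proof (induction N)
  case 0
  have "K {}" by (rule Kcomp) (simp add: rcp_const)
  then show ?case by simp
next
  case (Suc N)
  have "(\<Union>m<Suc N. A m) = (\<Union>m<N. A m) \<union> A N" by (auto simp: less_Suc_eq)
  then show ?case using Suc KUn by simp
qed

definition Q :: "nat \<Rightarrow> nat \<Rightarrow> nat \<Rightarrow> bool" where
  "Q c i j \<longleftrightarrow> prod_encode (pfst c, prod_encode (psnd c, prod_encode (i, j))) \<in> W"

definition Rel :: "nat \<Rightarrow> nat \<Rightarrow> (nat \<times> nat) set" where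
  "Rel n c = {(i, j). i < n \<and> j < n \<and> (Q c i j \<or> Q c j i)}"

definition EE :: "nat \<Rightarrow> (nat \<times> nat) set" where
  "EE n = {(y, y'). pfst y = pfst y' \<and> (psnd y, psnd y') \<in> (Rel n (pfst y))\<^sup>*}"

lemma Rel_sub: "Rel n c \<subseteq> {0..<n} \<times> {0..<n}" unfolding Rel_def by auto
lemma Rel_sym: "sym (Rel n c)" unfolding Rel_def sym_def by auto

lemma EE_equiv: "equiv UNIV (EE n)"
proof (rule equivI)
  show "refl (EE n)" unfolding EE_def refl_on_def by auto
  show "sym (EE n)" unfolding EE_def sym_def
    using sym_rtrancl[OF Rel_sym] by (auto simp: sym_def)
  show "trans (EE n)" unfolding EE_def trans_def by (auto intro: rtrancl_trans)
qed simp

lemma K_Qk: "K {t. (pfst (psnd t), psnd (psnd t)) \<in> (Rel n (pfst t)) ^^ k}"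
proof (induction k)
  case 0
  show ?case by (rule Kcomp) (simp, intro rc_intros)
next
  case (Suc k)
  let ?Qk = "{t. (pfst (psnd t), psnd (psnd t)) \<in> (Rel n (pfst t)) ^^ k}"
  let ?A = "\<lambda>m. {t. prod_encode (pfst t, prod_encode (pfst (psnd t), m)) \<in> ?Qk} \<inter>
     ({t. m < n \<and> psnd (psnd t) < n} \<inter>
      ({t. prod_encode (pfst (pfst t), prod_encode (psnd (pfst t), prod_encode (m, psnd (psnd t)))) \<in> W} \<union>
       {t. prod_encode (pfst (pfst t), prod_encode (psnd (pfst t), prod_encode (psnd (psnd t), m))) \<in> W}))"
  have "K (?A m)" if "m < n" for m
    by (intro KInt KUn Kpre[OF Suc.IH] Kpre[OF KW] Kcomp; (simp only: mem_Collect_eq)?; intro rc_intros)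
  then have "K (\<Union>m<n. ?A m)" by (rule K_UN)
  moreover have "{t. (pfst (psnd t), psnd (psnd t)) \<in> (Rel n (pfst t)) ^^ Suc k} = (\<Union>m<n. ?A m)"
  proof (rule set_eqI, rule iffI)
    fix t assume "t \<in> {t. (pfst (psnd t), psnd (psnd t)) \<in> (Rel n (pfst t)) ^^ Suc k}"
    then obtain m where m: "(pfst (psnd t), m) \<in> (Rel n (pfst t)) ^^ k" "(m, psnd (psnd t)) \<in> Rel n (pfst t)"
      by auto
    then have "m < n" unfolding Rel_def by auto
    with m show "t \<in> (\<Union>m<n. ?A m)" unfolding Rel_def Q_def by auto
  next
    fix t assume "t \<in> (\<Union>m<n. ?A m)"
    then obtain m where m: "m < n" "t \<in> ?A m" by blast
    then have "(pfst (psnd t), m) \<in> (Rel n (pfst t)) ^^ k" "(m, psnd (psnd t)) \<in> Rel n (pfst t)"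
      unfolding Rel_def Q_def by auto
    then show "t \<in> {t. (pfst (psnd t), psnd (psnd t)) \<in> (Rel n (pfst t)) ^^ Suc k}" by auto
  qed
  ultimately show ?case by simp
qed

lemma K_EE: "K (prod_encode ` EE n)"
proof -
  let ?D = "\<lambda>k. {z. pfst (pfst z) = pfst (psnd z)} \<inter>
    {z. prod_encode (pfst (pfst z), prod_encode (psnd (pfst z), psnd (psnd z))) \<in>
        {t. (pfst (psnd t), psnd (psnd t)) \<in> (Rel n (pfst t)) ^^ k}}"
  have "K (?D k)" for k by (intro KInt Kpre[OF K_Qk] Kcomp; (simp only: mem_Collect_eq)?; intro rc_intros)
  then have "K (\<Union>k<Suc (n*n). ?D k)" by (intro K_UN)
  moreover have "prod_encode ` EE n = (\<Union>k<Suc (n*n). ?D k)"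
    unfolding image_pe EE_def using rtrancl_bound[OF Rel_sub] by auto
  ultimately show ?thesis by simp
qed

lemma EE_small: "(y, y') \<in> EE n \<Longrightarrow> y \<noteq> y' \<Longrightarrow> pfst y = pfst y' \<and> psnd y < n \<and> psnd y' < n"
proof -
  assume a: "(y, y') \<in> EE n" "y \<noteq> y'"
  then have f: "pfst y = pfst y'" and r: "(psnd y, psnd y') \<in> (Rel n (pfst y))\<^sup>*" unfolding EE_def by auto
  have "psnd y \<noteq> psnd y'" using a(2) f pe_split by metis
  then have "psnd y < n \<and> psnd y' < n" using r
    by (metis Rel_sub converse_rtranclE rtranclE mem_Sigma_iff atLeastLessThan_iff subsetD)
  then show ?thesis using f by simp
qed

lemma complete_n:
  assumes F: "equiv UNIV F" "K (prod_encode ` F)"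
  shows "nary_reducible n F (EE n)"
proof -
  let ?h = "\<lambda>z. prod_encode (pi (pfst (psnd z)) (pfst z), pi (psnd (psnd z)) (pfst z))"
  have "K {z. ?h z \<in> prod_encode ` F}" by (rule Kpre[OF F(2)]) (intro rc_intros rc_pi)
  then obtain e where e: "\<And>z. ?h z \<in> prod_encode ` F \<longleftrightarrow> prod_encode (e, z) \<in> W"
    using Kuniv by blast
  have memF: "prod_encode (a, b) \<in> prod_encode ` F \<longleftrightarrow> (a, b) \<in> F" for a b
    using inj_prod_encode by (auto simp: inj_on_def)
  let ?g = "\<lambda>i xs. prod_encode (prod_encode (e, tup xs), i)"
  show ?thesis unfolding nary_reducible_def
  proof (intro exI[of _ ?g] conjI allI impI)
    fix i assume "i < n"
    show "recfn n (?g i)" by (rule recfn_rc2[OF rc2_pe recfn_rc2[OF rc2_pe rf_const recfn_tup] rf_const])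
  next
    fix xs :: "nat list" and i j assume xs: "length xs = n" and ij: "i < j \<and> j < n"
    let ?c = "prod_encode (e, tup xs)"
    have Q: "Q ?c a b \<longleftrightarrow> (xs ! a, xs ! b) \<in> F" if "a < n" "b < n" for a b
      using e[of "prod_encode (tup xs, prod_encode (a, b))"] that xs by (simp add: Q_def pi_tup memF)
    have symF: "(a, b) \<in> F \<Longrightarrow> (b, a) \<in> F" for a b using F(1) unfolding equiv_def sym_def by blast
    have transF: "(a, b) \<in> F \<Longrightarrow> (b, c) \<in> F \<Longrightarrow> (a, c) \<in> F" for a b c
      using F(1) unfolding equiv_def trans_def by blast
    have reflF: "(a, a) \<in> F" for a using F(1) unfolding equiv_def refl_on_def by blast
    have R: "Rel n ?c = {(a, b). a < n \<and> b < n \<and> (xs ! a, xs ! b) \<in> F}"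
      unfolding Rel_def using Q symF by auto
    have "(i, j) \<in> (Rel n ?c)\<^sup>* \<longleftrightarrow> (xs ! i, xs ! j) \<in> F"
    proof
      assume "(i, j) \<in> (Rel n ?c)\<^sup>*"
      then show "(xs ! i, xs ! j) \<in> F"
        by (induction rule: rtrancl_induct) (auto simp: R reflF intro: transF)
    next
      assume "(xs ! i, xs ! j) \<in> F"
      then have "(i, j) \<in> Rel n ?c" using ij by (simp add: R)
      then show "(i, j) \<in> (Rel n ?c)\<^sup>*" by blast
    qed
    then show "(xs ! i, xs ! j) \<in> F \<longleftrightarrow> (?g i xs, ?g j xs) \<in> EE n"
      unfolding EE_def by simp
  qed
qed

end


declare Sigma0.simps(2)[simp del]

context cls begin
lemma K_INT: "(\<And>m. m < (N::nat) \<Longrightarrow> K (A m)) \<Longrightarrow> K (\<Inter>m<N. A m)"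
proof (induction N)
  case 0
  have "K UNIV" by (rule Kcomp) (simp add: rcp_const)
  then show ?case by simp
next
  case (Suc N)
  have "(\<Inter>m<Suc N. A m) = (\<Inter>m<N. A m) \<inter> A N" by (auto simp: less_Suc_eq)
  then show ?case using Suc KInt by simp
qed
end

lemma Sig_cls: "cls (Sigma0 (Suc p)) (Uu p)"
proof unfold_locales
  show "Sigma0 (Suc p) (Uu p)" using Uu_props by blast
  fix A assume "Sigma0 (Suc p) A"
  then show "\<exists>e. \<forall>x. x \<in> A \<longleftrightarrow> prod_encode (e, x) \<in> Uu p" using Uu_props by blast
qed (auto intro: Sig_pre Sig_Un Sig_Int Sig_comp)

lemma Pi_cls: "cls (Pi0 (Suc p)) (- Uu p)"
proof unfold_locales
  show "Pi0 (Suc p) (- Uu p)" unfolding Pi0_def using Uu_props by simp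
  fix A assume "Pi0 (Suc p) A"
  then have "Sigma0 (Suc p) (- A)" unfolding Pi0_def .
  then obtain e where "\<And>x. x \<in> - A \<longleftrightarrow> prod_encode (e, x) \<in> Uu p" using Uu_props by blast
  then show "\<exists>e. \<forall>x. x \<in> A \<longleftrightarrow> prod_encode (e, x) \<in> - Uu p" by auto
qed (auto intro: Pi_pre Pi_Un Pi_Int Pi_comp)

lemma rc_tup_map: "(\<And>k. k \<in> set ks \<Longrightarrow> rc (f k)) \<Longrightarrow> rc (\<lambda>x. tup (map (\<lambda>k. f k x) ks))"
proof (induction ks)
  case Nil then show ?case by (simp add: rc_const)
next
  case (Cons a ks) then show ?case by (simp add: rc_pe)
qed

lemma map_pi_tup: "map (\<lambda>i. pi i (tup xs)) [0..<length xs] = xs"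
  by (rule nth_equalityI) (auto simp: pi_tup)

definition Xd :: "nat \<Rightarrow> nat \<Rightarrow> nat" where "Xd n e = tup (map (\<lambda>k. prod_encode (e, k)) [0..<Suc n])"
definition Gd :: "nat \<Rightarrow> nat \<Rightarrow> nat \<Rightarrow> bool" where
  "Gd n e vs \<longleftrightarrow> (\<forall>k<Suc n. prod_encode (pi k e, prod_encode (Xd n e, pi k vs)) \<in> U1)"
definition Good :: "nat \<Rightarrow> nat \<Rightarrow> bool" where
  "Good n e \<longleftrightarrow> (\<exists>vs. Gd n e vs \<and> (\<forall>b<Suc n. \<forall>a<b. pi a vs \<noteq> pi b vs))"
definition Bad :: "nat \<Rightarrow> nat \<Rightarrow> bool" where
  "Bad n e \<longleftrightarrow> (\<exists>vs. Gd n e vs \<and> (\<exists>b<Suc n. \<exists>a<b. pi a vs = pi b vs))"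

definition FS :: "nat \<Rightarrow> (nat \<times> nat) set" where
  "FS n = {(u, v). u = v \<or> (pfst u = pfst v \<and> psnd u \<le> n \<and> psnd v \<le> n \<and> Good n (pfst u))}"
definition FP :: "nat \<Rightarrow> (nat \<times> nat) set" where
  "FP n = {(u, v). u = v \<or> (pfst u = pfst v \<and> psnd u \<le> n \<and> psnd v \<le> n \<and> \<not> Bad n (pfst u))}"

lemma FS_equiv: "equiv UNIV (FS n)"
  unfolding FS_def by (rule equivI) (auto simp: refl_on_def sym_def trans_def)
lemma FP_equiv: "equiv UNIV (FP n)"
  unfolding FP_def by (rule equivI) (auto simp: refl_on_def sym_def trans_def)

lemma rc_Xd: "rc f \<Longrightarrow> rc (\<lambda>x. Xd n (f x))"
proof -
  assume f: "rc f"
  have "rc (\<lambda>x. tup (map (\<lambda>k. prod_encode (x, k)) [0..<Suc n]))"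
    by (rule rc_tup_map) (intro rc_intros)
  then show ?thesis unfolding Xd_def using rc_comp[OF _ f] by blast
qed

interpretation S1: cls "Sigma0 1" U1
  using Sig_cls[of 0] by simp

lemma Gd_set: "Sigma0 1 {w. Gd n (pfst w) (psnd w)}"
proof -
  have "Sigma0 1 (\<Inter>k<Suc n. {w. prod_encode (pi k (pfst w), prod_encode (Xd n (pfst w), pi k (psnd w))) \<in> U1})"
    by (intro S1.K_INT S1.Kpre[OF S1.KW]) (intro rc_intros rc_pi rc_Xd)
  moreover have "(\<Inter>k<Suc n. {w. prod_encode (pi k (pfst w), prod_encode (Xd n (pfst w), pi k (psnd w))) \<in> U1})
     = {w. Gd n (pfst w) (psnd w)}" unfolding Gd_def by auto
  ultimately show ?thesis by simp
qed

lemma Good_set: "Sigma0 1 {e. Good n e}"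
proof -
  have "Sigma0 1 ({w. Gd n (pfst w) (psnd w)} \<inter> {w. \<forall>b<Suc n. \<forall>a<b. pi a (psnd w) \<noteq> pi b (psnd w)})"
    by (intro S1.KInt Gd_set S1.Kcomp) (simp only: mem_Collect_eq, intro rc_intros rc_pi)
  then have that: "Sigma0 (Suc 0) ({w. Gd n (pfst w) (psnd w)} \<inter> {w. \<forall>b<Suc n. \<forall>a<b. pi a (psnd w) \<noteq> pi b (psnd w)})" by simp
  have "Sigma0 (Suc 0) {e. \<exists>y. prod_encode (e, y) \<in> ({w. Gd n (pfst w) (psnd w)} \<inter> {w. \<forall>b<Suc n. \<forall>a<b. pi a (psnd w) \<noteq> pi b (psnd w)})}"
    by (rule Sig_proj[OF that])
  then show ?thesis unfolding Good_def by simp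
qed

lemma Bad_set: "Sigma0 1 {e. Bad n e}"
proof -
  have "Sigma0 1 ({w. Gd n (pfst w) (psnd w)} \<inter> {w. \<exists>b<Suc n. \<exists>a<b. pi a (psnd w) = pi b (psnd w)})"
    by (intro S1.KInt Gd_set S1.Kcomp) (simp only: mem_Collect_eq, intro rc_intros rc_pi)
  then have that: "Sigma0 (Suc 0) ({w. Gd n (pfst w) (psnd w)} \<inter> {w. \<exists>b<Suc n. \<exists>a<b. pi a (psnd w) = pi b (psnd w)})" by simp
  have "Sigma0 (Suc 0) {e. \<exists>y. prod_encode (e, y) \<in> ({w. Gd n (pfst w) (psnd w)} \<inter> {w. \<exists>b<Suc n. \<exists>a<b. pi a (psnd w) = pi b (psnd w)})}"
    by (rule Sig_proj[OF that])
  then show ?thesis unfolding Bad_def by simp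
qed

lemma FS_sig: "Sigma0 1 (prod_encode ` FS n)"
proof -
  have "Sigma0 1 ({z. pfst z = psnd z} \<union> ({z. pfst (pfst z) = pfst (psnd z) \<and> psnd (pfst z) \<le> n \<and> psnd (psnd z) \<le> n}
      \<inter> {z. pfst (pfst z) \<in> {e. Good n e}}))"
    by (intro S1.KUn S1.KInt S1.Kpre[OF Good_set] S1.Kcomp; (simp only: mem_Collect_eq)?; intro rc_intros)
  moreover have "prod_encode ` FS n = {z. pfst z = psnd z} \<union> ({z. pfst (pfst z) = pfst (psnd z) \<and> psnd (pfst z) \<le> n \<and> psnd (psnd z) \<le> n}
      \<inter> {z. pfst (pfst z) \<in> {e. Good n e}})"
    unfolding image_pe FS_def by auto
  ultimately show ?thesis by simp
qed

lemma FP_pi: "Sigma0 1 (- prod_encode ` FP n)"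
proof -
  have "Sigma0 1 ({z. pfst z \<noteq> psnd z} \<inter> ({z. pfst (pfst z) \<noteq> pfst (psnd z) \<or> n < psnd (pfst z) \<or> n < psnd (psnd z)}
      \<union> {z. pfst (pfst z) \<in> {e. Bad n e}}))"
    by (intro S1.KUn S1.KInt S1.Kpre[OF Bad_set] S1.Kcomp; (simp only: mem_Collect_eq)?; intro rc_intros)
  moreover have "- prod_encode ` FP n = {z. pfst z \<noteq> psnd z} \<inter> ({z. pfst (pfst z) \<noteq> pfst (psnd z) \<or> n < psnd (pfst z) \<or> n < psnd (psnd z)}
      \<union> {z. pfst (pfst z) \<in> {e. Bad n e}})"
    unfolding image_pe FP_def by auto
  ultimately show ?thesis by simp
qed

lemma pigeon:
  assumes small: "\<And>y y'. (y, y') \<in> E \<Longrightarrow> y \<noteq> y' \<Longrightarrow> pfst y = pfst y' \<and> psnd y < n \<and> psnd y' < n"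
    and ys: "\<And>a b. a < b \<Longrightarrow> b \<le> n \<Longrightarrow> ys a \<noteq> ys b \<and> (ys a, ys b) \<in> E"
    and n: "1 \<le> n"
  shows False
proof -
  have lt: "psnd (ys k) < n" if "k \<le> n" for k
  proof (cases "k = 0")
    case True then show ?thesis using small ys[of 0 n] n by auto
  next
    case False then show ?thesis using small ys[of 0 k] that by auto
  qed
  have "inj_on (\<lambda>k. psnd (ys k)) {0..n}"
  proof (rule inj_onI)
    fix a b assume ab: "a \<in> {0..n}" "b \<in> {0..n}" "psnd (ys a) = psnd (ys b)"
    show "a = b"
    proof (rule ccontr)
      assume "a \<noteq> b"
      then consider "a < b" | "b < a" by linarith
      then show False
      proof cases
        case 1
        then have "ys a \<noteq> ys b" "pfst (ys a) = pfst (ys b)" using ys[of a b] small ab by auto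
        then show False using ab(3) by (metis pe_split)
      next
        case 2
        then have "ys b \<noteq> ys a" "pfst (ys b) = pfst (ys a)" using ys[of b a] small ab by auto
        then show False using ab(3) by (metis pe_split)
      qed
    qed
  qed
  moreover have "(\<lambda>k. psnd (ys k)) ` {0..n} \<subseteq> {0..<n}" using lt by auto
  ultimately have "card {0..n} \<le> card {0..<n}" by (intro card_inj_on_le) auto
  then show False by simp
qed


lemma rc_gmap: "recfn (Suc n) G \<Longrightarrow> rc (\<lambda>z. G (map (\<lambda>i. pi i z) [0..<Suc n]))"
proof -
  assume G: "recfn (Suc n) G"
  have "recfn 1 (\<lambda>xs. G (map (\<lambda>i. (\<lambda>i ys. pi i (hd ys)) i xs) [0..<Suc n]))"
  proof (rule rf_comp[OF G], intro allI impI)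
    fix i :: nat
    have "rc (\<lambda>x. pi i x)" by (intro rc_pi rc_const rc_id)
    then show "recfn 1 ((\<lambda>i ys. pi i (hd ys)) i)" unfolding rc_def by simp
  qed
  then show ?thesis unfolding rc_def by simp
qed

lemma diag_core:
  assumes small: "\<And>y y'. (y, y') \<in> E \<Longrightarrow> y \<noteq> y' \<Longrightarrow> pfst y = pfst y' \<and> psnd y < n \<and> psnd y' < n"
    and reflE: "\<And>y. (y, y) \<in> E"
    and n: "1 \<le> n"
    and red: "nary_reducible (n + 1) F E"
    and F: "F = FS n \<or> F = FP n"
  shows False
proof -
  obtain g where g: "\<And>i. i < n + 1 \<Longrightarrow> recfn (n + 1) (g i)"
    and gp: "\<And>xs i j. length xs = n + 1 \<Longrightarrow> i < j \<Longrightarrow> j < n + 1 \<Longrightarrow> ((xs ! i, xs ! j) \<in> F \<longleftrightarrow> (g i xs, g j xs) \<in> E)"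
    using red unfolding nary_reducible_def by blast
  let ?G = "\<lambda>k. {z. g k (map (\<lambda>i. pi i (pfst z)) [0..<Suc n]) = psnd z}"
  have Gs: "Sigma0 1 (?G k)" if "k < Suc n" for k
  proof -
    have r: "rc (\<lambda>z. g k (map (\<lambda>i. pi i z) [0..<Suc n]))" using rc_gmap g that by simp
    show ?thesis by (rule Sig_comp) (simp only: mem_Collect_eq, intro rcp_eq rc_comp[OF r] rc_intros)
  qed
  have "\<forall>k. \<exists>e. k < Suc n \<longrightarrow> (\<forall>z. z \<in> ?G k \<longleftrightarrow> prod_encode (e, z) \<in> U1)"
    using U1_univ Gs by blast
  then obtain es where es: "\<And>k z. k < Suc n \<Longrightarrow> z \<in> ?G k \<longleftrightarrow> prod_encode (es k, z) \<in> U1" by metis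
  define e where "e = tup (map es [0..<Suc n])"
  define xe where "xe = map (\<lambda>k. prod_encode (e, k)) [0..<Suc n]"
  define ys where "ys = (\<lambda>k. g k xe)"
  have pie: "pi k e = es k" if "k < Suc n" for k unfolding e_def using that by (simp add: pi_tup del: upt_Suc)
  have Xd: "Xd n e = tup xe" unfolding Xd_def xe_def ..
  have lxe: "length xe = Suc n" unfolding xe_def by simp
  have mX: "map (\<lambda>i. pi i (Xd n e)) [0..<Suc n] = xe" using map_pi_tup[of xe] Xd lxe by simp
  have Gd: "Gd n e vs \<longleftrightarrow> (\<forall>k<Suc n. ys k = pi k vs)" for vs
  proof -
    have "Gd n e vs \<longleftrightarrow> (\<forall>k<Suc n. prod_encode (Xd n e, pi k vs) \<in> ?G k)"
      unfolding Gd_def using es pie by simp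
    also have "\<dots> \<longleftrightarrow> (\<forall>k<Suc n. ys k = pi k vs)" using mX by (simp add: ys_def)
    finally show ?thesis .
  qed
  have vs: "\<forall>k<Suc n. ys k = pi k (tup (map ys [0..<Suc n]))" by (simp add: pi_tup del: upt_Suc)
  have Good: "Good n e \<longleftrightarrow> (\<forall>b<Suc n. \<forall>a<b. ys a \<noteq> ys b)"
  proof
    assume "Good n e"
    then obtain w where w: "Gd n e w" "\<forall>b<Suc n. \<forall>a<b. pi a w \<noteq> pi b w" unfolding Good_def by blast
    have h: "\<forall>k<Suc n. ys k = pi k w" using w(1) Gd by blast
    show "\<forall>b<Suc n. \<forall>a<b. ys a \<noteq> ys b"
    proof (intro allI impI)
      fix b a assume "b < Suc n" "a < b"
      then show "ys a \<noteq> ys b" using h w(2) by (metis less_trans)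
    qed
  next
    assume a: "\<forall>b<Suc n. \<forall>a<b. ys a \<noteq> ys b"
    have "Gd n e (tup (map ys [0..<Suc n]))" using Gd vs by blast
    moreover have "\<forall>b<Suc n. \<forall>a<b. pi a (tup (map ys [0..<Suc n])) \<noteq> pi b (tup (map ys [0..<Suc n]))"
      using a vs by (metis less_trans)
    ultimately show "Good n e" unfolding Good_def by blast
  qed
  have Bad: "Bad n e \<longleftrightarrow> (\<exists>b<Suc n. \<exists>a<b. ys a = ys b)"
  proof
    assume "Bad n e"
    then obtain w where w: "Gd n e w" "\<exists>b<Suc n. \<exists>a<b. pi a w = pi b w" unfolding Bad_def by blast
    have h: "\<forall>k<Suc n. ys k = pi k w" using w(1) Gd by blast
    then show "\<exists>b<Suc n. \<exists>a<b. ys a = ys b" using w(2) by (metis less_trans)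
  next
    assume a: "\<exists>b<Suc n. \<exists>a<b. ys a = ys b"
    have "Gd n e (tup (map ys [0..<Suc n]))" using Gd vs by blast
    moreover have "\<exists>b<Suc n. \<exists>a<b. pi a (tup (map ys [0..<Suc n])) = pi b (tup (map ys [0..<Suc n]))"
      using a vs by (metis less_trans)
    ultimately show "Bad n e" unfolding Bad_def by blast
  qed
  have red': "(prod_encode (e, a), prod_encode (e, b)) \<in> F \<longleftrightarrow> (ys a, ys b) \<in> E" if "a < b" "b \<le> n" for a b
  proof -
    have xa: "xe ! k = prod_encode (e, k)" if "k < Suc n" for k unfolding xe_def using that by (simp del: upt_Suc)
    show ?thesis using gp[of xe a b] lxe that xa[of a] xa[of b] unfolding ys_def by simp
  qed
  have FSe: "(prod_encode (e, a), prod_encode (e, b)) \<in> FS n \<longleftrightarrow> Good n e" if "a < b" "b \<le> n" for a b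
    using that unfolding FS_def by auto
  have FPe: "(prod_encode (e, a), prod_encode (e, b)) \<in> FP n \<longleftrightarrow> \<not> Bad n e" if "a < b" "b \<le> n" for a b
    using that unfolding FP_def by auto
  from F show False
  proof
    assume F: "F = FS n"
    show False
    proof (cases "Good n e")
      case True
      have "ys a \<noteq> ys b \<and> (ys a, ys b) \<in> E" if "a < b" "b \<le> n" for a b
        using True Good red'[OF that] FSe[OF that] F that by auto
      then show False using pigeon[OF small _ n] by blast
    next
      case False
      then obtain a b where ab: "b < Suc n" "a < b" "ys a = ys b" using Good by blast
      then have "(ys a, ys b) \<in> E" using reflE by simp
      then have "Good n e" using red'[of a b] FSe[of a b] F ab by simp
      then show False using False by simp
    qed
  next
    assume F: "F = FP n"
    show False
    proof (cases "Bad n e")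
      case True
      then obtain a b where ab: "b < Suc n" "a < b" "ys a = ys b" using Bad by blast
      then have "(ys a, ys b) \<in> E" using reflE by simp
      then have "\<not> Bad n e" using red'[of a b] FPe[of a b] F ab by simp
      then show False using True by simp
    next
      case False
      have "ys a \<noteq> ys b \<and> (ys a, ys b) \<in> E" if "a < b" "b \<le> n" for a b
        using False Bad red'[OF that] FPe[OF that] F that by auto
      then show False using pigeon[OF small _ n] by blast
    qed
  qed
qed


definition E0 :: "nat \<Rightarrow> (nat \<times> nat) set" where
  "E0 n = {(x, y). x - (x - (n - 1)) = y - (y - (n - 1))}"

lemma E0_equiv: "equiv UNIV (E0 n)"
  unfolding E0_def by (rule equivI) (auto simp: refl_on_def sym_def trans_def)

lemma E0_rcp: "rcp (\<lambda>z. z \<in> prod_encode ` E0 n)"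
  unfolding image_pe E0_def by (simp, intro rc_intros)

lemma E0_sig: "Sigma_eqrel 0 (E0 n)"
  unfolding Sigma_eqrel_def using E0_equiv E0_rcp by (simp add: S0_iff)

lemma E0_pi: "Pi_eqrel 0 (E0 n)"
  unfolding Pi_eqrel_def Pi0_def using E0_equiv rcp_not[OF E0_rcp] by (simp add: S0_iff)

lemma sig0_rcp: "Sigma_eqrel 0 F \<Longrightarrow> rcp (\<lambda>z. (pfst z, psnd z) \<in> F)"
  unfolding Sigma_eqrel_def S0_iff image_pe by simp

lemma pi0_rcp: "Pi_eqrel 0 F \<Longrightarrow> rcp (\<lambda>z. (pfst z, psnd z) \<in> F)"
proof -
  assume "Pi_eqrel 0 F"
  then have "rcp (\<lambda>z. z \<in> - prod_encode ` F)" unfolding Pi_eqrel_def Pi0_def S0_iff by simp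
  then have "rcp (\<lambda>z. \<not> (z \<in> - prod_encode ` F))" by (rule rcp_not)
  then show ?thesis unfolding image_pe by simp
qed

lemma E0_complete:
  assumes n: "1 \<le> n" and F: "equiv UNIV F" and Fc: "rcp (\<lambda>z. (pfst z, psnd z) \<in> F)"
  shows "nary_reducible n F (E0 n)"
proof -
  have symF: "(a, b) \<in> F \<Longrightarrow> (b, a) \<in> F" for a b using F unfolding equiv_def sym_def by blast
  have transF: "(a, b) \<in> F \<Longrightarrow> (b, c) \<in> F \<Longrightarrow> (a, c) \<in> F" for a b c
    using F unfolding equiv_def trans_def by blast
  have reflF: "(a, a) \<in> F" for a using F unfolding equiv_def refl_on_def by blast
  define lab where "lab i d = (LEAST j. (if (pi j d, pi i d) \<in> F then 0 else 1) = (0::nat))" for i d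
  have lab': "lab i d = (LEAST j. (pi j d, pi i d) \<in> F)" for i d unfolding lab_def by simp
  have rl: "rc (lab i)" for i
  proof -
    have c: "rcp (\<lambda>w. (pi (psnd w) (pfst w), pi i (pfst w)) \<in> F)"
      using rcp_comp[OF Fc, of "\<lambda>w. prod_encode (pi (psnd w) (pfst w), pi i (pfst w))"]
      by (simp add: rc_pe rc_pi rc_psnd rc_pfst rc_id rc_const)
    have "rc (\<lambda>d. LEAST j. (if (pi j d, pi i d) \<in> F then 0 else 1) = (0::nat))"
    proof (rule rc_mu)
      show "rc (\<lambda>w. if (pi (psnd w) (pfst w), pi i (pfst w)) \<in> F then 0 else 1)"
        by (rule rc_if[OF c rc_const rc_const])
      fix d show "\<exists>y. (if (pi y d, pi i d) \<in> F then 0 else 1) = (0::nat)"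
        using reflF by (intro exI[of _ i]) simp
    qed
    then show ?thesis unfolding lab_def by simp
  qed
  let ?g = "\<lambda>i xs. lab i (tup xs)"
  show ?thesis unfolding nary_reducible_def
  proof (intro exI[of _ ?g] conjI allI impI)
    fix i assume "i < n"
    show "recfn n (?g i)" by (rule recfn_rc[OF rl recfn_tup])
  next
    fix xs :: "nat list" and i j assume xs: "length xs = n" and ij: "i < j \<and> j < n"
    let ?d = "tup xs"
    have le: "lab k ?d \<le> k" for k unfolding lab' by (rule Least_le) (rule reflF)
    have inF: "(pi (lab k ?d) ?d, pi k ?d) \<in> F" for k unfolding lab' by (rule LeastI[of _ k]) (rule reflF)
    have small: "lab k ?d < n" if "k < n" for k using le[of k] that by linarith
    have m: "x - (x - (n - 1)) = x" if "x < n" for x using that by simp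
    have E: "(lab i ?d, lab j ?d) \<in> E0 n \<longleftrightarrow> lab i ?d = lab j ?d"
      unfolding E0_def using m[OF small[of i]] m[OF small[of j]] ij by simp
    have pis: "pi k ?d = xs ! k" if "k < n" for k using pi_tup xs that by simp
    show "(xs ! i, xs ! j) \<in> F \<longleftrightarrow> (?g i xs, ?g j xs) \<in> E0 n"
      unfolding E
    proof
      assume h: "(xs ! i, xs ! j) \<in> F"
      have "(pi k ?d, pi i ?d) \<in> F \<longleftrightarrow> (pi k ?d, pi j ?d) \<in> F" for k
        using h pis[of i] pis[of j] ij transF symF by (metis less_trans)
      then show "lab i ?d = lab j ?d" unfolding lab' by simp
    next
      assume h: "lab i ?d = lab j ?d"
      have "(pi (lab i ?d) ?d, pi i ?d) \<in> F" "(pi (lab i ?d) ?d, pi j ?d) \<in> F" using inF[of i] inF[of j] h by simp_all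
      then have "(pi i ?d, pi j ?d) \<in> F" using transF symF by blast
      then show "(xs ! i, xs ! j) \<in> F" using pis[of i] pis[of j] ij by simp
    qed
  qed
qed

definition Idr :: "(nat \<times> nat) set" where "Idr = {(x, y). x = y}"

lemma Idr_equiv: "equiv UNIV Idr" unfolding Idr_def by (rule equivI) (auto simp: refl_on_def sym_def trans_def)
lemma Idr_rcp: "rcp (\<lambda>z. z \<in> prod_encode ` Idr)" unfolding image_pe Idr_def by (simp, intro rc_intros)
lemma Idr_sig: "Sigma_eqrel 0 Idr"
  unfolding Sigma_eqrel_def using Idr_equiv Idr_rcp by (simp add: S0_iff)
lemma Idr_pi: "Pi_eqrel 0 Idr"
  unfolding Pi_eqrel_def Pi0_def using Idr_equiv rcp_not[OF Idr_rcp] by (simp add: S0_iff)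

lemma E0_not:
  assumes n: "1 \<le> n" shows "\<not> nary_reducible (n + 1) Idr (E0 n)"
proof
  assume "nary_reducible (n + 1) Idr (E0 n)"
  then obtain g where gp: "\<And>xs i j. length xs = n + 1 \<Longrightarrow> i < j \<Longrightarrow> j < n + 1 \<Longrightarrow> ((xs ! i, xs ! j) \<in> Idr \<longleftrightarrow> (g i xs, g j xs) \<in> E0 n)"
    unfolding nary_reducible_def by blast
  let ?xs = "[0..<n+1]"
  let ?m = "\<lambda>k. g k ?xs - (g k ?xs - (n - 1))"
  have ne: "?m a \<noteq> ?m b" if "a < b" "b \<le> n" for a b
    using gp[of ?xs a b] that unfolding Idr_def E0_def by (simp del: upt_Suc)
  have "inj_on ?m {0..n}"
  proof (rule inj_onI)
    fix a b assume ab: "a \<in> {0..n}" "b \<in> {0..n}" "?m a = ?m b"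
    show "a = b"
    proof (rule ccontr)
      assume "a \<noteq> b"
      then consider "a < b" | "b < a" by linarith
      then show False
      proof cases
        case 1 then show False using ne[of a b] ab by auto
      next
        case 2 then show False using ne[of b a] ab by auto
      qed
    qed
  qed
  moreover have "?m ` {0..n} \<subseteq> {0..<n}" using n by auto
  ultimately have "card {0..n} \<le> card {0..<n}" by (intro card_inj_on_le) auto
  then show False by simp
qed

theorem theorem4p11:
  fixes p n :: nat
  assumes "n \<ge> 2"
  shows "(\<exists>E. complete_under n (Sigma_eqrel p) E \<and> \<not> complete_under (n + 1) (Sigma_eqrel p) E)
       \<and> (\<exists>E. complete_under n (Pi_eqrel p) E \<and> \<not> complete_under (n + 1) (Pi_eqrel p) E)"
proof (cases p)
  case 0
  have n: "1 \<le> n" using assms by simp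
  have s: "complete_under n (Sigma_eqrel 0) (E0 n) \<and> \<not> complete_under (n + 1) (Sigma_eqrel 0) (E0 n)"
    unfolding complete_under_def using E0_sig E0_complete[OF n] sig0_rcp Idr_sig E0_not[OF n]
    by (auto simp: Sigma_eqrel_def)
  have q: "complete_under n (Pi_eqrel 0) (E0 n) \<and> \<not> complete_under (n + 1) (Pi_eqrel 0) (E0 n)"
    unfolding complete_under_def using E0_pi E0_complete[OF n] pi0_rcp Idr_pi E0_not[OF n]
    by (auto simp: Pi_eqrel_def)
  show ?thesis using s q 0 by blast
next
  case (Suc q)
  have n: "1 \<le> n" using assms by simp
  interpret A: cls "Sigma0 (Suc q)" "Uu q" by (rule Sig_cls)
  interpret B: cls "Pi0 (Suc q)" "- Uu q" by (rule Pi_cls)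
  have s1: "complete_under n (Sigma_eqrel (Suc q)) (A.EE n)"
    unfolding complete_under_def Sigma_eqrel_def using A.EE_equiv A.K_EE A.complete_n by blast
  have s2: "\<not> complete_under (n + 1) (Sigma_eqrel (Suc q)) (A.EE n)"
  proof
    assume c: "complete_under (n + 1) (Sigma_eqrel (Suc q)) (A.EE n)"
    have "Sigma_eqrel (Suc q) (FS n)" unfolding Sigma_eqrel_def
      using FS_equiv Sig_mono[OF FS_sig] by simp
    then have red: "nary_reducible (n + 1) (FS n) (A.EE n)" using c unfolding complete_under_def by blast
    have rf: "\<And>y. (y, y) \<in> A.EE n" by (simp add: A.EE_def)
    show False using diag_core[OF A.EE_small rf n red] by blast
  qed
  have p1: "complete_under n (Pi_eqrel (Suc q)) (B.EE n)"
    unfolding complete_under_def Pi_eqrel_def using B.EE_equiv B.K_EE B.complete_n by blast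
  have p2: "\<not> complete_under (n + 1) (Pi_eqrel (Suc q)) (B.EE n)"
  proof
    assume c: "complete_under (n + 1) (Pi_eqrel (Suc q)) (B.EE n)"
    have "Pi_eqrel (Suc q) (FP n)" unfolding Pi_eqrel_def Pi0_def
      using FP_equiv Sig_mono[OF FP_pi] by simp
    then have red: "nary_reducible (n + 1) (FP n) (B.EE n)" using c unfolding complete_under_def by blast
    have rf: "\<And>y. (y, y) \<in> B.EE n" by (simp add: B.EE_def)
    show False using diag_core[OF B.EE_small rf n red] by blast
  qed
  show ?thesis using s1 s2 p1 p2 Suc by blast
qed


end
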